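(* Let $\mathbf r(x,y)$ be the middle surface of a membrane O surface with constant purely normal load $q_n\neq 0$ (setting and notation as in the context), and suppose it is of the 1st kind, i.e. the curvature line coordinates $(x,y)$ are such that $$2\overline{A}_1 H_\circ - q_n A_1^2 = -q_n,\qquad 2\overline{A}_2 K_\circ - q_n A_2^2 = q_n$$ (the normalization $f(x)=-g(y)=q_n$). Then the first and third fundamental forms are represented as $$\mathrm{I} = (\cosh\alpha + h\sinh\alpha)^2\,dx^2 + (\sinh\alpha + h\cosh\alpha)^2\,dy^2,\qquad \mathrm{III} = e^{2\xi}(\sinh^2\alpha\,dx^2 + \cosh^2\alpha\,dy^2),$$ where the functions $h,\alpha,\xi$ of $(x,y)$ satisfy the system $$h_x = (h+\coth\alpha)\,\xi_x,\qquad h_y = (h+\tanh\alpha)\,\xi_y,$$ $$\xi_{xy} = \xi_x\xi_y + (\log\sinh\alpha)_y\,\xi_x + (\log\cosh\alpha)_x\,\xi_y,$$ $$(\alpha_x + \xi_x\coth\alpha)_x + (\alpha_y + \xi_y\tanh\alpha)_y + e^{2\xi}\sinh\alpha\cosh\alpha = 0.$$ Furthermore, the stress resultants are given by $$T_1 = \frac{q_n e^{-\xi}}{2}\,\frac{2h\sinh\alpha + (1+h^2)\cosh\alpha}{\sinh\alpha + h\cosh\alpha},\qquad T_2 = \frac{q_n e^{-\xi}}{2}\,\frac{2h\cosh\alpha + (1+h^2)\sinh\alpha}{\cosh\alpha + h\sinh\alpha}.$$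
   Context: Let $\mathbf r(x,y)$ be a smooth surface in $\mathbb R^3$ parametrized by curvature line coordinates $(x,y)$, normalized so that $\mathbf r_x = A_1\mathbf X$, $\mathbf r_y = A_2\mathbf Y$ with $\mathbf X,\mathbf Y$ orthonormal. Let $\mathbf N = \mathbf X\times\mathbf Y$, let $\kappa_1,\kappa_2$ be the principal curvatures along the $x$- and $y$-lines, and set $H_\circ = -\kappa_1 A_1$, $K_\circ = -\kappa_2 A_2$, so that $\mathbf N_x = H_\circ\mathbf X$, $\mathbf N_y = K_\circ\mathbf Y$; the first fundamental form is $\mathrm I = A_1^2dx^2 + A_2^2dy^2$ and the third is $\mathrm{III} = H_\circ^2dx^2 + K_\circ^2dy^2$. Put $p=(A_1)_y/A_2$, $q = (A_2)_x/A_1$; the Gauss–Mainardi–Codazzi equations are $(H_\circ)_y = pK_\circ$, $(K_\circ)_x = qH_\circ$, $p_y+q_x+H_\circ K_\circ = 0$. The surface is the middle surface of a shell membrane on which a constant purely normal load $q_n\neq0$ (per unit area) acts, with principal stress lines coinciding with principal curvature lines; the in-plane normal stress resultants $T_1,T_2$ satisfy the equilibrium equations $(T_1)_x + (\log A_1)_x(T_1-T_2)=0$, $(T_2)_y + (\log A_2)_y(T_2-T_1)=0$, $\kappa_1T_1+\kappa_2T_2+q_n=0$. Such a configuration is called a membrane O surface. Set $\overline A_1 = T_2A_1$, $\overline A_2 = T_1A_2$. Then $f := q_nA_1^2 - 2\overline A_1H_\circ$ depends only on $x$ and $g := q_nA_2^2 - 2\overline A_2K_\circ$ depends only on $y$.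 The membrane O surface is said to be of the 1st kind if the curvature line coordinates can be chosen so that $f=-g=q_n$, and of the 2nd kind if they can be chosen so that $f=g=q_n$. *)

theory Defs
  imports "HOL-Analysis.Analysis"
begin

definition pdx :: "(real \<times> real \<Rightarrow> 'a::real_normed_vector) \<Rightarrow> real \<times> real \<Rightarrow> 'a" where
  "pdx f p = vector_derivative (\<lambda>t. f (t, snd p)) (at (fst p))"

definition pdy :: "(real \<times> real \<Rightarrow> 'a::real_normed_vector) \<Rightarrow> real \<times> real \<Rightarrow> 'a" where
  "pdy f p = vector_derivative (\<lambda>t. f (fst p, t)) (at (snd p))"

text \<open>Smoothness (C-infinity) on a set: differentiable, with all partial derivatives
  again smooth (coinductively, i.e. partial derivatives of all orders exist).\<close>
coinductive smooth_on :: "(real \<times> real) set \<Rightarrow> (real \<times> real \<Rightarrow> 'a::real_normed_vector) \<Rightarrow> bool"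
  where "\<lbrakk> f differentiable_on U; smooth_on U (pdx f); smooth_on U (pdy f) \<rbrakk> \<Longrightarrow> smooth_on U f"

end

theory Submission
  imports Defs
begin


lemma line_x_diff:
  fixes f :: "real \<times> real \<Rightarrow> 'a::real_normed_vector"
  assumes "f differentiable (at p)"
  shows "((\<lambda>t. f (t, snd p)) has_vector_derivative pdx f p) (at (fst p))"
proof -
  have g: "(\<lambda>t::real. (t, snd p)) differentiable (at (fst p))"
    by (rule differentiableI[of _ "\<lambda>t. (t,0)"]) (auto intro!: derivative_eq_intros)
  have "((\<lambda>t. f (t, snd p))) differentiable (at (fst p))"
    using differentiable_chain_at[OF g] assms by (simp add: o_def)
  then show ?thesis unfolding pdx_def by (simp add: vector_derivative_works[symmetric])
qed

lemma line_y_diff: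
  fixes f :: "real \<times> real \<Rightarrow> 'a::real_normed_vector"
  assumes "f differentiable (at p)"
  shows "((\<lambda>t. f (fst p, t)) has_vector_derivative pdy f p) (at (snd p))"
proof -
  have g: "(\<lambda>t::real. (fst p, t)) differentiable (at (snd p))"
    by (rule differentiableI[of _ "\<lambda>t. (0,t)"]) (auto intro!: derivative_eq_intros)
  have "((\<lambda>t. f (fst p, t))) differentiable (at (snd p))"
    using differentiable_chain_at[OF g] assms by (simp add: o_def)
  then show ?thesis unfolding pdy_def by (simp add: vector_derivative_works[symmetric])
qed

lemma pdx_eqI:
  fixes f g :: "real \<times> real \<Rightarrow> 'a::real_normed_vector"
  assumes "open U" "p \<in> U" "\<And>q. q \<in> U \<Longrightarrow> f q = g q"
    and "((\<lambda>t. g (t, snd p)) has_vector_derivative D) (at (fst p))"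
  shows "pdx f p = D"
proof -
  let ?S = "(\<lambda>t. (t, snd p)) -` U"
  have "open ?S"
    by (rule open_vimage[OF assms(1)]) (auto intro!: continuous_intros)
  moreover have "fst p \<in> ?S" using assms(2) by simp
  ultimately have "((\<lambda>t. f (t, snd p)) has_vector_derivative D) (at (fst p))"
    by (rule has_vector_derivative_transform_within_open[OF assms(4)]) (simp add: assms(3))
  then show ?thesis unfolding pdx_def by (rule vector_derivative_at)
qed

lemma pdy_eqI:
  fixes f g :: "real \<times> real \<Rightarrow> 'a::real_normed_vector"
  assumes "open U" "p \<in> U" "\<And>q. q \<in> U \<Longrightarrow> f q = g q"
    and "((\<lambda>t. g (fst p, t)) has_vector_derivative D) (at (snd p))"
  shows "pdy f p = D"
proof -
  let ?S = "(\<lambda>t. (fst p, t)) -` U"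
  have "open ?S"
    by (rule open_vimage[OF assms(1)]) (auto intro!: continuous_intros)
  moreover have "snd p \<in> ?S" using assms(2) by simp
  ultimately have "((\<lambda>t. f (fst p, t)) has_vector_derivative D) (at (snd p))"
    by (rule has_vector_derivative_transform_within_open[OF assms(4)]) (simp add: assms(3))
  then show ?thesis unfolding pdy_def by (rule vector_derivative_at)
qed

lemma pdx_cong:
  assumes "open U" "p \<in> U" "\<And>q. q \<in> U \<Longrightarrow> f q = g q" "g differentiable (at p)"
  shows "pdx f p = pdx g p"
  using pdx_eqI[OF assms(1-3) line_x_diff[OF assms(4)]] .

lemma pdy_cong:
  assumes "open U" "p \<in> U" "\<And>q. q \<in> U \<Longrightarrow> f q = g q" "g differentiable (at p)"
  shows "pdy f p = pdy g p"
  using pdy_eqI[OF assms(1-3) line_y_diff[OF assms(4)]] .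

lemma smooth_diff_at: "smooth_on U f \<Longrightarrow> open U \<Longrightarrow> p \<in> U \<Longrightarrow> f differentiable (at p)"
  by (erule smooth_on.cases) (auto simp: differentiable_on_eq_differentiable_at)

lemma smooth_pdx: "smooth_on U f \<Longrightarrow> smooth_on U (pdx f)"
  by (erule smooth_on.cases) auto
lemma smooth_pdy: "smooth_on U f \<Longrightarrow> smooth_on U (pdy f)"
  by (erule smooth_on.cases) auto

lemma rect_dist:
  fixes a b u v s r :: real
  assumes "a \<le> u" "u \<le> a + s" "b \<le> v" "v \<le> b + s" "3 * s \<le> r" "0 < s"
  shows "dist (u, v) (a, b) < r"
proof -
  have "dist (u, v) (a, b) = sqrt ((dist u a)\<^sup>2 + (dist v b)\<^sup>2)" by (simp add: dist_Pair_Pair)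
  also have "\<dots> \<le> \<bar>dist u a\<bar> + \<bar>dist v b\<bar>" by (rule sqrt_sum_squares_le_sum_abs)
  also have "\<dots> \<le> 2 * s" using assms by (simp add: dist_real_def)
  finally show ?thesis using assms by linarith
qed

lemma schwarz:
  fixes f :: "real \<times> real \<Rightarrow> real"
  assumes U: "open U" and pU: "p \<in> U" and sm: "smooth_on U f"
  shows "pdy (pdx f) p = pdx (pdy f) p"
proof (rule ccontr)
  assume ne: "pdy (pdx f) p \<noteq> pdx (pdy f) p"
  define a where "a = fst p"
  define b where "b = snd p"
  have p: "p = (a, b)" by (simp add: a_def b_def)
  define \<epsilon> where "\<epsilon> = \<bar>pdy (pdx f) p - pdx (pdy f) p\<bar> / 2"
  have eps: "\<epsilon> > 0" using ne by (simp add: \<epsilon>_def)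
  obtain e where e: "e > 0" "ball p e \<subseteq> U" using U pU open_contains_ball by blast
  have smx: "smooth_on U (pdx f)" and smy: "smooth_on U (pdy f)"
    using sm by (auto intro: smooth_pdx smooth_pdy)
  have "continuous (at p) (pdy (pdx f))"
    using smooth_diff_at[OF smooth_pdy[OF smx] U pU] by (rule differentiable_imp_continuous_within)
  then obtain d1 where d1: "d1 > 0" "\<And>q. dist q p < d1 \<Longrightarrow> dist (pdy (pdx f) q) (pdy (pdx f) p) < \<epsilon>"
    using eps unfolding continuous_at_eps_delta by blast
  have "continuous (at p) (pdx (pdy f))"
    using smooth_diff_at[OF smooth_pdx[OF smy] U pU] by (rule differentiable_imp_continuous_within)
  then obtain d2 where d2: "d2 > 0" "\<And>q. dist q p < d2 \<Longrightarrow> dist (pdx (pdy f) q) (pdx (pdy f) p) < \<epsilon>"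
    using eps unfolding continuous_at_eps_delta by blast
  define s where "s = min e (min d1 d2) / 3"
  have s: "s > 0" using e d1 d2 by (simp add: s_def)
  have inU: "(u, v) \<in> U" if "a \<le> u" "u \<le> a + s" "b \<le> v" "v \<le> b + s" for u v
  proof -
    have "dist (u, v) (a, b) < e" by (rule rect_dist) (use that s in \<open>auto simp: s_def\<close>)
    then show ?thesis using e p by (auto simp: dist_commute)
  qed
  have close1: "dist (u, v) p < d1" if "a \<le> u" "u \<le> a + s" "b \<le> v" "v \<le> b + s" for u v
    unfolding p by (rule rect_dist) (use that s in \<open>auto simp: s_def\<close>)
  have close2: "dist (u, v) p < d2" if "a \<le> u" "u \<le> a + s" "b \<le> v" "v \<le> b + s" for u v
    unfolding p by (rule rect_dist) (use that s in \<open>auto simp: s_def\<close>)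
  have Dx: "DERIV (\<lambda>u. g (u, v)) u :> pdx g (u, v)" if "smooth_on U g" "(u, v) \<in> U" for g u v
    using line_x_diff[OF smooth_diff_at[OF that(1) U that(2)]]
    by (simp add: has_real_derivative_iff_has_vector_derivative)
  have Dy: "DERIV (\<lambda>v. g (u, v)) v :> pdy g (u, v)" if "smooth_on U g" "(u, v) \<in> U" for g u v
    using line_y_diff[OF smooth_diff_at[OF that(1) U that(2)]]
    by (simp add: has_real_derivative_iff_has_vector_derivative)
  define \<Delta> where "\<Delta> = f (a + s, b + s) - f (a + s, b) - f (a, b + s) + f (a, b)"
  obtain u0 where u0: "a < u0" "u0 < a + s"
    "(f (a + s, b + s) - f (a + s, b)) - (f (a, b + s) - f (a, b))
       = s * (pdx f (u0, b + s) - pdx f (u0, b))"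
  proof -
    have "\<exists>z. a < z \<and> z < a + s \<and> (f (a + s, b + s) - f (a + s, b)) - (f (a, b + s) - f (a, b))
       = ((a + s) - a) * (pdx f (z, b + s) - pdx f (z, b))"
      by (rule MVT2[where f = "\<lambda>u. f (u, b + s) - f (u, b)"])
         (use s in \<open>auto intro!: derivative_eq_intros Dx[OF sm] inU\<close>)
    then show ?thesis using that by auto
  qed
  obtain v0 where v0: "b < v0" "v0 < b + s"
    "pdx f (u0, b + s) - pdx f (u0, b) = s * pdy (pdx f) (u0, v0)"
  proof -
    have "\<exists>z. b < z \<and> z < b + s \<and> pdx f (u0, b + s) - pdx f (u0, b)
       = ((b + s) - b) * pdy (pdx f) (u0, z)"
      by (rule MVT2[where f = "\<lambda>v. pdx f (u0, v)"])
         (use s u0 in \<open>auto intro!: Dy[OF smx] inU\<close>)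
    then show ?thesis using that by auto
  qed
  obtain v1 where v1: "b < v1" "v1 < b + s"
    "(f (a + s, b + s) - f (a, b + s)) - (f (a + s, b) - f (a, b))
       = s * (pdy f (a + s, v1) - pdy f (a, v1))"
  proof -
    have "\<exists>z. b < z \<and> z < b + s \<and> (f (a + s, b + s) - f (a, b + s)) - (f (a + s, b) - f (a, b))
       = ((b + s) - b) * (pdy f (a + s, z) - pdy f (a, z))"
      by (rule MVT2[where f = "\<lambda>v. f (a + s, v) - f (a, v)"])
         (use s in \<open>auto intro!: derivative_eq_intros Dy[OF sm] inU\<close>)
    then show ?thesis using that by auto
  qed
  obtain u1 where u1: "a < u1" "u1 < a + s"
    "pdy f (a + s, v1) - pdy f (a, v1) = s * pdx (pdy f) (u1, v1)"
  proof -
    have "\<exists>z. a < z \<and> z < a + s \<and> pdy f (a + s, v1) - pdy f (a, v1)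
       = ((a + s) - a) * pdx (pdy f) (z, v1)"
      by (rule MVT2[where f = "\<lambda>u. pdy f (u, v1)"])
         (use s v1 in \<open>auto intro!: Dx[OF smy] inU\<close>)
    then show ?thesis using that by auto
  qed
  have "s * (s * pdy (pdx f) (u0, v0)) = s * (s * pdx (pdy f) (u1, v1))"
    using u0(3) v0(3) v1(3) u1(3) by (simp add: algebra_simps)
  then have eq: "pdy (pdx f) (u0, v0) = pdx (pdy f) (u1, v1)" using s by simp
  have "dist (pdy (pdx f) (u0, v0)) (pdy (pdx f) p) < \<epsilon>"
    by (rule d1(2), rule close1) (use u0 v0 in auto)
  moreover have "dist (pdx (pdy f) (u1, v1)) (pdx (pdy f) p) < \<epsilon>"
    by (rule d2(2), rule close2) (use u1 v1 in auto)
  ultimately have "\<bar>pdy (pdx f) (u0, v0) - pdy (pdx f) p\<bar> + \<bar>pdx (pdy f) (u1, v1) - pdx (pdy f) p\<bar> < \<bar>pdy (pdx f) p - pdx (pdy f) p\<bar>"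
    unfolding \<epsilon>_def dist_real_def by (smt (z3) field_sum_of_halves)
  moreover have "\<bar>pdy (pdx f) p - pdx (pdy f) p\<bar> \<le> \<bar>pdy (pdx f) (u0, v0) - pdy (pdx f) p\<bar> + \<bar>pdx (pdy f) (u1, v1) - pdx (pdy f) p\<bar>"
    using eq abs_triangle_ineq4[of "pdy (pdx f) p - pdy (pdx f) (u0, v0)" "pdx (pdy f) p - pdx (pdy f) (u1, v1)"] by (simp add: abs_minus_commute)
  ultimately show False by linarith
qed

lemma differentiable_transform_open:
  fixes g h :: "'a::real_normed_vector \<Rightarrow> 'b::real_normed_vector"
  assumes "open U" "q \<in> U" "\<And>x. x \<in> U \<Longrightarrow> h x = g x" "h differentiable (at q)"
  shows "g differentiable (at q)"
  using assms has_derivative_transform_within_open unfolding differentiable_def by metis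

lemma smooth_coinduct:
  assumes P: "P g"
    and step: "\<And>g. P g \<Longrightarrow> g differentiable_on U \<and> P (pdx g) \<and> P (pdy g)"
  shows "smooth_on U g"
  using P
proof (coinduction arbitrary: g rule: smooth_on.coinduct)
  case (smooth_on g)
  then show ?case using step by blast
qed

lemma pdx_comp:
  fixes f :: "real \<times> real \<Rightarrow> real^'n"
  assumes "f differentiable (at p)"
  shows "pdx (\<lambda>q. f q $ i) p = pdx f p $ i"
  unfolding pdx_def
  by (rule vector_derivative_at,
      rule bounded_linear.has_vector_derivative[OF bounded_linear_vec_nth line_x_diff[OF assms, unfolded pdx_def]])

lemma pdy_comp:
  fixes f :: "real \<times> real \<Rightarrow> real^'n"
  assumes "f differentiable (at p)"
  shows "pdy (\<lambda>q. f q $ i) p = pdy f p $ i"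
  unfolding pdy_def
  by (rule vector_derivative_at,
      rule bounded_linear.has_vector_derivative[OF bounded_linear_vec_nth line_y_diff[OF assms, unfolded pdy_def]])

lemma diff_comp:
  fixes f :: "real \<times> real \<Rightarrow> real^'n"
  assumes "f differentiable (at p)"
  shows "(\<lambda>q. f q $ i) differentiable (at p)"
proof -
  have "(\<lambda>x. x $ i) differentiable (at (f p))"
    using bounded_linear_vec_nth bounded_linear_imp_differentiable by blast
  from differentiable_chain_at[OF assms this] show ?thesis by (simp add: o_def)
qed

lemma smooth_comp:
  fixes f :: "real \<times> real \<Rightarrow> real^'n"
  assumes U: "open U" and sm: "smooth_on U f"
  shows "smooth_on U (\<lambda>q. f q $ i)"
proof (rule smooth_coinduct[where P = "\<lambda>g. \<exists>f::real\<times>real\<Rightarrow>real^'n. smooth_on U f \<and> (\<forall>q\<in>U. g q = f q $ i)"])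
  show "\<exists>f'. smooth_on U f' \<and> (\<forall>q\<in>U. f q $ i = f' q $ i)" using sm by blast
next
  fix g assume "\<exists>f::real\<times>real\<Rightarrow>real^'n. smooth_on U f \<and> (\<forall>q\<in>U. g q = f q $ i)"
  then obtain f where f: "smooth_on U f" "\<forall>q\<in>U. g q = f q $ i" by blast
  have gd: "g differentiable (at q)" if "q \<in> U" for q
  proof (rule differentiable_transform_open[OF U that, of "\<lambda>q. f q $ i"])
    show "\<And>x. x \<in> U \<Longrightarrow> f x $ i = g x" using f(2) by simp
    show "(\<lambda>q. f q $ i) differentiable at q" using diff_comp[of f q i] smooth_diff_at[OF f(1) U that] by blast
  qed
  have "g differentiable_on U" using gd U by (simp add: differentiable_on_eq_differentiable_at)
  moreover have "\<forall>q\<in>U. pdx g q = pdx f q $ i"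
  proof
    fix q assume q: "q \<in> U"
    have "pdx g q = pdx (\<lambda>q. f q $ i) q"
      by (rule pdx_cong[OF U q]) (use f q in \<open>auto intro!: diff_comp smooth_diff_at[OF f(1) U q]\<close>)
    also have "\<dots> = pdx f q $ i" by (rule pdx_comp[OF smooth_diff_at[OF f(1) U q]])
    finally show "pdx g q = pdx f q $ i" .
  qed
  moreover have "\<forall>q\<in>U. pdy g q = pdy f q $ i"
  proof
    fix q assume q: "q \<in> U"
    have "pdy g q = pdy (\<lambda>q. f q $ i) q"
      by (rule pdy_cong[OF U q]) (use f q in \<open>auto intro!: diff_comp smooth_diff_at[OF f(1) U q]\<close>)
    also have "\<dots> = pdy f q $ i" by (rule pdy_comp[OF smooth_diff_at[OF f(1) U q]])
    finally show "pdy g q = pdy f q $ i" .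
  qed
  ultimately show "g differentiable_on U \<and> (\<exists>f::real\<times>real\<Rightarrow>real^'n. smooth_on U f \<and> (\<forall>q\<in>U. pdx g q = f q $ i))
      \<and> (\<exists>f::real\<times>real\<Rightarrow>real^'n. smooth_on U f \<and> (\<forall>q\<in>U. pdy g q = f q $ i))"
    using f(1) smooth_pdx smooth_pdy by blast
qed

lemma schwarz_vec:
  fixes f :: "real \<times> real \<Rightarrow> real^'n"
  assumes U: "open U" and pU: "p \<in> U" and sm: "smooth_on U f"
  shows "pdy (pdx f) p = pdx (pdy f) p"
proof (subst vec_eq_iff, rule allI)
  fix i
  let ?g = "\<lambda>q. f q $ i"
  have smg: "smooth_on U ?g" by (rule smooth_comp[OF U sm])
  have "pdy (pdx f) p $ i = pdy (\<lambda>q. pdx f q $ i) p"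
    by (rule pdy_comp[symmetric], rule smooth_diff_at[OF smooth_pdx[OF sm] U pU])
  also have "\<dots> = pdy (pdx ?g) p"
    by (rule pdy_cong[OF U pU], rule pdx_comp[symmetric], rule smooth_diff_at[OF sm U], assumption)
       (rule smooth_diff_at[OF smooth_pdx[OF smg] U pU])
  also have "\<dots> = pdx (pdy ?g) p" by (rule schwarz[OF U pU smg])
  also have "\<dots> = pdx (\<lambda>q. pdy f q $ i) p"
    by (rule pdx_cong[OF U pU], rule pdy_comp, rule smooth_diff_at[OF sm U], assumption)
       (rule diff_comp, rule smooth_diff_at[OF smooth_pdy[OF sm] U pU])
  also have "\<dots> = pdx (pdy f) p $ i"
    by (rule pdx_comp, rule smooth_diff_at[OF smooth_pdy[OF sm] U pU])
  finally show "pdy (pdx f) p $ i = pdx (pdy f) p $ i" .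
qed

lemma DERIV_differentiable: "DERIV g x :> D \<Longrightarrow> g differentiable (at x)"
  by (rule differentiableI[OF has_field_derivative_imp_has_derivative])

lemma comp_step:
  fixes f :: "real \<times> real \<Rightarrow> real"
  assumes fd: "f differentiable (at p)" and d: "DERIV \<phi> (f p) :> d"
  shows "(\<lambda>q. \<phi> (f q)) differentiable (at p)"
    "pdx (\<lambda>q. \<phi> (f q)) p = d * pdx f p"
    "pdy (\<lambda>q. \<phi> (f q)) p = d * pdy f p"
proof -
  show "(\<lambda>q. \<phi> (f q)) differentiable (at p)"
    using differentiable_chain_at[OF fd DERIV_differentiable[OF d]] by (simp add: o_def)
  have lx: "DERIV (\<lambda>t. f (t, snd p)) (fst p) :> pdx f p"
    using line_x_diff[OF fd] by (simp add: has_real_derivative_iff_has_vector_derivative)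
  have "DERIV (\<lambda>t. \<phi> (f (t, snd p))) (fst p) :> d * pdx f p"
    using DERIV_chain2[OF _ lx] d by simp
  then show "pdx (\<lambda>q. \<phi> (f q)) p = d * pdx f p" unfolding pdx_def
    by (intro vector_derivative_at) (simp add: has_real_derivative_iff_has_vector_derivative)
  have ly: "DERIV (\<lambda>t. f (fst p, t)) (snd p) :> pdy f p"
    using line_y_diff[OF fd] by (simp add: has_real_derivative_iff_has_vector_derivative)
  have "DERIV (\<lambda>t. \<phi> (f (fst p, t))) (snd p) :> d * pdy f p"
    using DERIV_chain2[OF _ ly] d by simp
  then show "pdy (\<lambda>q. \<phi> (f q)) p = d * pdy f p" unfolding pdy_def
    by (intro vector_derivative_at) (simp add: has_real_derivative_iff_has_vector_derivative)
qed

lemma binop_step: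
  fixes f g :: "real \<times> real \<Rightarrow> real"
  assumes fd: "f differentiable (at p)" and gd: "g differentiable (at p)"
  shows "(\<lambda>q. f q + g q) differentiable (at p)"
    "(\<lambda>q. f q * g q) differentiable (at p)"
    "pdx (\<lambda>q. f q + g q) p = pdx f p + pdx g p"
    "pdy (\<lambda>q. f q + g q) p = pdy f p + pdy g p"
    "pdx (\<lambda>q. f q * g q) p = pdx f p * g p + f p * pdx g p"
    "pdy (\<lambda>q. f q * g q) p = pdy f p * g p + f p * pdy g p"
proof -
  show "(\<lambda>q. f q + g q) differentiable (at p)" "(\<lambda>q. f q * g q) differentiable (at p)"
    using fd gd by auto
  have lxf: "DERIV (\<lambda>t. f (t, snd p)) (fst p) :> pdx f p"
    using line_x_diff[OF fd] by (simp add: has_real_derivative_iff_has_vector_derivative)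
  have lxg: "DERIV (\<lambda>t. g (t, snd p)) (fst p) :> pdx g p"
    using line_x_diff[OF gd] by (simp add: has_real_derivative_iff_has_vector_derivative)
  have lyf: "DERIV (\<lambda>t. f (fst p, t)) (snd p) :> pdy f p"
    using line_y_diff[OF fd] by (simp add: has_real_derivative_iff_has_vector_derivative)
  have lyg: "DERIV (\<lambda>t. g (fst p, t)) (snd p) :> pdy g p"
    using line_y_diff[OF gd] by (simp add: has_real_derivative_iff_has_vector_derivative)
  have "DERIV (\<lambda>t. f (t, snd p) + g (t, snd p)) (fst p) :> pdx f p + pdx g p"
    by (rule derivative_intros lxf lxg)+
  then show "pdx (\<lambda>q. f q + g q) p = pdx f p + pdx g p" unfolding pdx_def
    by (intro vector_derivative_at) (simp add: has_real_derivative_iff_has_vector_derivative)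
  have "DERIV (\<lambda>t. f (fst p, t) + g (fst p, t)) (snd p) :> pdy f p + pdy g p"
    by (rule derivative_intros lyf lyg)+
  then show "pdy (\<lambda>q. f q + g q) p = pdy f p + pdy g p" unfolding pdy_def
    by (intro vector_derivative_at) (simp add: has_real_derivative_iff_has_vector_derivative)
  have "DERIV (\<lambda>t. f (t, snd p) * g (t, snd p)) (fst p) :> pdx f p * g p + f p * pdx g p"
    using DERIV_mult[OF lxf lxg] by (simp add: algebra_simps)
  then show "pdx (\<lambda>q. f q * g q) p = pdx f p * g p + f p * pdx g p" unfolding pdx_def
    by (intro vector_derivative_at) (simp add: has_real_derivative_iff_has_vector_derivative)
  have "DERIV (\<lambda>t. f (fst p, t) * g (fst p, t)) (snd p) :> pdy f p * g p + f p * pdy g p"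
    using DERIV_mult[OF lyf lyg] by (simp add: algebra_simps)
  then show "pdy (\<lambda>q. f q * g q) p = pdy f p * g p + f p * pdy g p" unfolding pdy_def
    by (intro vector_derivative_at) (simp add: has_real_derivative_iff_has_vector_derivative)
qed

inductive smc :: "(real \<times> real) set \<Rightarrow> (real \<times> real \<Rightarrow> real) \<Rightarrow> bool" for U where
  smc_base: "smooth_on U f \<Longrightarrow> smc U f"
| smc_const: "smc U (\<lambda>q. c)"
| smc_add: "smc U f \<Longrightarrow> smc U g \<Longrightarrow> smc U (\<lambda>q. f q + g q)"
| smc_mult: "smc U f \<Longrightarrow> smc U g \<Longrightarrow> smc U (\<lambda>q. f q * g q)"
| smc_inv: "smc U f \<Longrightarrow> (\<forall>q\<in>U. f q \<noteq> 0) \<Longrightarrow> smc U (\<lambda>q. inverse (f q))"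
| smc_sqrt: "smc U f \<Longrightarrow> (\<forall>q\<in>U. f q > 0) \<Longrightarrow> smc U (\<lambda>q. sqrt (f q))"
| smc_ln: "smc U f \<Longrightarrow> (\<forall>q\<in>U. f q > 0) \<Longrightarrow> smc U (\<lambda>q. ln (f q))"
| smc_arsinh: "smc U f \<Longrightarrow> smc U (\<lambda>q. arsinh (f q))"

lemma comp_case:
  assumes U: "open U"
    and fd: "\<forall>p\<in>U. f differentiable (at p)"
    and gx: "smc U gx" "\<forall>p\<in>U. pdx f p = gx p"
    and gy: "smc U gy" "\<forall>p\<in>U. pdy f p = gy p"
    and dd: "\<And>p. p \<in> U \<Longrightarrow> DERIV \<phi> (f p) :> d p"
    and dsm: "smc U d"
  shows "(\<forall>p\<in>U. (\<lambda>q. \<phi> (f q)) differentiable (at p)) \<and>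
     (\<exists>g. smc U g \<and> (\<forall>p\<in>U. pdx (\<lambda>q. \<phi> (f q)) p = g p)) \<and>
     (\<exists>g. smc U g \<and> (\<forall>p\<in>U. pdy (\<lambda>q. \<phi> (f q)) p = g p))"
proof (intro conjI)
  show "\<forall>p\<in>U. (\<lambda>q. \<phi> (f q)) differentiable (at p)"
  proof
    fix p assume p: "p \<in> U"
    show "(\<lambda>q. \<phi> (f q)) differentiable (at p)"
      by (rule comp_step(1)[of f p \<phi> "d p"]) (use fd p dd in auto)
  qed
  show "\<exists>g. smc U g \<and> (\<forall>p\<in>U. pdx (\<lambda>q. \<phi> (f q)) p = g p)"
    by (rule exI[of _ "\<lambda>q. d q * gx q"]) (use comp_step(2)[OF _ dd] fd gx dsm in \<open>auto intro: smc_mult\<close>)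
  show "\<exists>g. smc U g \<and> (\<forall>p\<in>U. pdy (\<lambda>q. \<phi> (f q)) p = g p)"
    by (rule exI[of _ "\<lambda>q. d q * gy q"]) (use comp_step(3)[OF _ dd] fd gy dsm in \<open>auto intro: smc_mult\<close>)
qed

lemma smc_props:
  assumes U: "open U" and "smc U f"
  shows "(\<forall>p\<in>U. f differentiable (at p)) \<and> (\<exists>g. smc U g \<and> (\<forall>p\<in>U. pdx f p = g p))
         \<and> (\<exists>g. smc U g \<and> (\<forall>p\<in>U. pdy f p = g p))"
  using assms(2)
proof induction
  case (smc_base f)
  then show ?case using smooth_diff_at[OF _ U] smooth_pdx smooth_pdy smc.smc_base by blast
next
  case (smc_const c)
  have "pdx (\<lambda>q. c) p = 0" "pdy (\<lambda>q. c) p = 0" for p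
    unfolding pdx_def pdy_def by (auto intro!: vector_derivative_at)
  then show ?case using smc.smc_const[of U 0] by auto
next
  case (smc_add f g)
  then obtain fx fy gx gy where h: "\<forall>p\<in>U. f differentiable (at p)" "\<forall>p\<in>U. g differentiable (at p)"
    "smc U fx" "\<forall>p\<in>U. pdx f p = fx p" "smc U fy" "\<forall>p\<in>U. pdy f p = fy p"
    "smc U gx" "\<forall>p\<in>U. pdx g p = gx p" "smc U gy" "\<forall>p\<in>U. pdy g p = gy p" by blast
  show ?case
  proof (intro conjI)
    show "\<forall>p\<in>U. (\<lambda>q. f q + g q) differentiable (at p)" using h binop_step(1) by blast
    show "\<exists>k. smc U k \<and> (\<forall>p\<in>U. pdx (\<lambda>q. f q + g q) p = k p)"
      by (rule exI[of _ "\<lambda>q. fx q + gx q"]) (use h binop_step(3) in \<open>auto intro: smc.smc_add\<close>)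
    show "\<exists>k. smc U k \<and> (\<forall>p\<in>U. pdy (\<lambda>q. f q + g q) p = k p)"
      by (rule exI[of _ "\<lambda>q. fy q + gy q"]) (use h binop_step(4) in \<open>auto intro: smc.smc_add\<close>)
  qed
next
  case (smc_mult f g)
  then obtain fx fy gx gy where h: "\<forall>p\<in>U. f differentiable (at p)" "\<forall>p\<in>U. g differentiable (at p)"
    "smc U fx" "\<forall>p\<in>U. pdx f p = fx p" "smc U fy" "\<forall>p\<in>U. pdy f p = fy p"
    "smc U gx" "\<forall>p\<in>U. pdx g p = gx p" "smc U gy" "\<forall>p\<in>U. pdy g p = gy p" by blast
  show ?case
  proof (intro conjI)
    show "\<forall>p\<in>U. (\<lambda>q. f q * g q) differentiable (at p)" using h binop_step(2) by blast
    show "\<exists>k. smc U k \<and> (\<forall>p\<in>U. pdx (\<lambda>q. f q * g q) p = k p)"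
      by (rule exI[of _ "\<lambda>q. fx q * g q + f q * gx q"])
         (use h binop_step(5) smc_mult in \<open>auto intro: smc.smc_add smc.smc_mult\<close>)
    show "\<exists>k. smc U k \<and> (\<forall>p\<in>U. pdy (\<lambda>q. f q * g q) p = k p)"
      by (rule exI[of _ "\<lambda>q. fy q * g q + f q * gy q"])
         (use h binop_step(6) smc_mult in \<open>auto intro: smc.smc_add smc.smc_mult\<close>)
  qed
next
  case (smc_inv f)
  then obtain fx fy where h: "\<forall>p\<in>U. f differentiable (at p)"
    "smc U fx" "\<forall>p\<in>U. pdx f p = fx p" "smc U fy" "\<forall>p\<in>U. pdy f p = fy p" by blast
  have i: "smc U (\<lambda>q. inverse (f q))" using smc_inv by (auto intro: smc.smc_inv)
  have ds: "smc U (\<lambda>q. (-1) * (inverse (f q) * inverse (f q)))" by (intro smc.smc_mult smc.smc_const i)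
  show ?case
    by (rule comp_case[OF U h _ ds]) (use smc_inv in \<open>auto intro!: DERIV_inverse[THEN DERIV_cong] simp: power2_eq_square\<close>)
next
  case (smc_sqrt f)
  then obtain fx fy where h: "\<forall>p\<in>U. f differentiable (at p)"
    "smc U fx" "\<forall>p\<in>U. pdx f p = fx p" "smc U fy" "\<forall>p\<in>U. pdy f p = fy p" by blast
  have i: "smc U (\<lambda>q. inverse (sqrt (f q)))" using smc_sqrt by (auto intro!: smc.smc_inv smc.smc_sqrt)
  have ds: "smc U (\<lambda>q. inverse (sqrt (f q)) * (1/2))" by (intro smc.smc_mult smc.smc_const i)
  show ?case
    by (rule comp_case[OF U h _ ds]) (use smc_sqrt in \<open>auto intro!: DERIV_real_sqrt[THEN DERIV_cong]\<close>)
next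
  case (smc_ln f)
  then obtain fx fy where h: "\<forall>p\<in>U. f differentiable (at p)"
    "smc U fx" "\<forall>p\<in>U. pdx f p = fx p" "smc U fy" "\<forall>p\<in>U. pdy f p = fy p" by blast
  have i: "smc U (\<lambda>q. inverse (f q))" using smc_ln by (auto intro!: smc.smc_inv)
  show ?case
    by (rule comp_case[OF U h _ i]) (use smc_ln in \<open>auto intro!: DERIV_ln\<close>)
next
  case (smc_arsinh f)
  then obtain fx fy where h: "\<forall>p\<in>U. f differentiable (at p)"
    "smc U fx" "\<forall>p\<in>U. pdx f p = fx p" "smc U fy" "\<forall>p\<in>U. pdy f p = fy p" by blast
  have pos: "\<forall>q\<in>U. f q * f q + 1 > 0" by (auto intro: add_nonneg_pos)
  have i: "smc U (\<lambda>q. inverse (sqrt (f q * f q + 1)))"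
    using smc_arsinh pos by (auto intro!: smc.smc_inv smc.smc_sqrt smc.smc_add smc.smc_mult smc.smc_const)
  show ?case
    by (rule comp_case[OF U h _ i])
       (auto intro!: arsinh_real_has_field_derivative[THEN DERIV_cong] i simp: power2_eq_square divide_inverse)
qed

lemma smc_smooth:
  assumes U: "open U" and f: "smc U f"
  shows "smooth_on U f"
proof (rule smooth_coinduct[where P = "\<lambda>g. \<exists>f. smc U f \<and> (\<forall>q\<in>U. g q = f q)"])
  show "\<exists>f'. smc U f' \<and> (\<forall>q\<in>U. f q = f' q)" using f by blast
next
  fix g assume "\<exists>f. smc U f \<and> (\<forall>q\<in>U. g q = f q)"
  then obtain f where f: "smc U f" "\<forall>q\<in>U. g q = f q" by blast
  from smc_props[OF U f(1)] obtain fx fy where h: "\<forall>p\<in>U. f differentiable (at p)"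
    "smc U fx" "\<forall>p\<in>U. pdx f p = fx p" "smc U fy" "\<forall>p\<in>U. pdy f p = fy p" by blast
  have "g differentiable (at q)" if "q \<in> U" for q
    by (rule differentiable_transform_open[OF U that, of f]) (use f h that in auto)
  then have "g differentiable_on U" using U by (simp add: differentiable_on_eq_differentiable_at)
  moreover have "pdx g q = fx q" if "q \<in> U" for q
    using pdx_cong[OF U that, of g f] f h that by auto
  moreover have "pdy g q = fy q" if "q \<in> U" for q
    using pdy_cong[OF U that, of g f] f h that by auto
  ultimately show "g differentiable_on U \<and> (\<exists>f. smc U f \<and> (\<forall>q\<in>U. pdx g q = f q))
      \<and> (\<exists>f. smc U f \<and> (\<forall>q\<in>U. pdy g q = f q))" using h by metis
qed

lemma pdx_inner:
  fixes f g :: "real \<times> real \<Rightarrow> 'a::real_inner"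
  assumes "f differentiable (at p)" "g differentiable (at p)"
  shows "pdx (\<lambda>q. f q \<bullet> g q) p = pdx f p \<bullet> g p + f p \<bullet> pdx g p"
  unfolding pdx_def
  by (rule vector_derivative_at,
      rule has_vector_derivative_eq_rhs[OF bounded_bilinear.has_vector_derivative[OF bounded_bilinear_inner
        line_x_diff[OF assms(1), unfolded pdx_def] line_x_diff[OF assms(2), unfolded pdx_def]]])
     (simp add: algebra_simps)

lemma pdy_inner:
  fixes f g :: "real \<times> real \<Rightarrow> 'a::real_inner"
  assumes "f differentiable (at p)" "g differentiable (at p)"
  shows "pdy (\<lambda>q. f q \<bullet> g q) p = pdy f p \<bullet> g p + f p \<bullet> pdy g p"
  unfolding pdy_def
  by (rule vector_derivative_at,
      rule has_vector_derivative_eq_rhs[OF bounded_bilinear.has_vector_derivative[OF bounded_bilinear_inner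
        line_y_diff[OF assms(1), unfolded pdy_def] line_y_diff[OF assms(2), unfolded pdy_def]]])
     (simp add: algebra_simps)

lemma pdx_scaleR:
  fixes a :: "real \<times> real \<Rightarrow> real" and f :: "real \<times> real \<Rightarrow> 'a::real_normed_vector"
  assumes "a differentiable (at p)" "f differentiable (at p)"
  shows "pdx (\<lambda>q. a q *\<^sub>R f q) p = pdx a p *\<^sub>R f p + a p *\<^sub>R pdx f p"
  unfolding pdx_def
  by (rule vector_derivative_at,
      rule has_vector_derivative_eq_rhs[OF bounded_bilinear.has_vector_derivative[OF bounded_bilinear_scaleR
        line_x_diff[OF assms(1), unfolded pdx_def] line_x_diff[OF assms(2), unfolded pdx_def]]])
     (simp add: algebra_simps)

lemma pdy_scaleR:
  fixes a :: "real \<times> real \<Rightarrow> real" and f :: "real \<times> real \<Rightarrow> 'a::real_normed_vector"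
  assumes "a differentiable (at p)" "f differentiable (at p)"
  shows "pdy (\<lambda>q. a q *\<^sub>R f q) p = pdy a p *\<^sub>R f p + a p *\<^sub>R pdy f p"
  unfolding pdy_def
  by (rule vector_derivative_at,
      rule has_vector_derivative_eq_rhs[OF bounded_bilinear.has_vector_derivative[OF bounded_bilinear_scaleR
        line_y_diff[OF assms(1), unfolded pdy_def] line_y_diff[OF assms(2), unfolded pdy_def]]])
     (simp add: algebra_simps)

lemma pdx_const_on:
  assumes "open U" "p \<in> U" "\<And>q. q \<in> U \<Longrightarrow> f q = c"
  shows "pdx f p = 0"
  by (rule pdx_eqI[OF assms(1,2), of f "\<lambda>q. c"]) (use assms(3) in auto)

lemma pdy_const_on:
  assumes "open U" "p \<in> U" "\<And>q. q \<in> U \<Longrightarrow> f q = c"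
  shows "pdy f p = 0"
  by (rule pdy_eqI[OF assms(1,2), of f "\<lambda>q. c"]) (use assms(3) in auto)

lemma dot_const_x:
  fixes f g :: "real \<times> real \<Rightarrow> 'a::real_inner"
  assumes "open U" "p \<in> U" "\<And>q. q \<in> U \<Longrightarrow> f q \<bullet> g q = c"
    "f differentiable (at p)" "g differentiable (at p)"
  shows "pdx f p \<bullet> g p + f p \<bullet> pdx g p = 0"
  using pdx_inner[OF assms(4,5)] pdx_const_on[OF assms(1,2), of "\<lambda>q. f q \<bullet> g q"] assms(3) by simp

lemma dot_const_y:
  fixes f g :: "real \<times> real \<Rightarrow> 'a::real_inner"
  assumes "open U" "p \<in> U" "\<And>q. q \<in> U \<Longrightarrow> f q \<bullet> g q = c"
    "f differentiable (at p)" "g differentiable (at p)"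
  shows "pdy f p \<bullet> g p + f p \<bullet> pdy g p = 0"
  using pdy_inner[OF assms(4,5)] pdy_const_on[OF assms(1,2), of "\<lambda>q. f q \<bullet> g q"] assms(3) by simp

lemma bb_cross: "bounded_bilinear (cross3 :: real^3 \<Rightarrow> real^3 \<Rightarrow> real^3)"
  using bilinear_conv_bounded_bilinear bilinear_cross by blast

lemma cross_differentiable:
  fixes f g :: "real \<times> real \<Rightarrow> real^3"
  assumes "f differentiable (at p)" "g differentiable (at p)"
  shows "(\<lambda>q. cross3 (f q) (g q)) differentiable (at p)"
  using assms unfolding differentiable_def by (blast intro: bounded_bilinear.FDERIV[OF bb_cross])

lemma cross_cross_expand: "cross3 (cross3 x y) z = (x \<bullet> z) *\<^sub>R y - (y \<bullet> z) *\<^sub>R x"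
  for x y z :: "real^3"
  by (simp add: cross3_simps forall_3)

lemma frame_parseval:
  fixes X Y u v :: "real^3"
  assumes "norm X = 1" "norm Y = 1" "X \<bullet> Y = 0"
  shows "u \<bullet> v = (u \<bullet> X) * (v \<bullet> X) + (u \<bullet> Y) * (v \<bullet> Y) + (u \<bullet> cross3 X Y) * (v \<bullet> cross3 X Y)"
proof -
  define N where "N = cross3 X Y"
  have XX: "X \<bullet> X = 1" "Y \<bullet> Y = 1" using assms by (simp_all add: dot_square_norm)
  have NX: "N \<bullet> X = 0" "N \<bullet> Y = 0" unfolding N_def
    by (simp_all add: dot_cross_self inner_commute)
  have "(norm N)\<^sup>2 + (X \<bullet> Y)\<^sup>2 = (norm X * norm Y)\<^sup>2" unfolding N_def by (rule norm_cross_dot)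
  then have NN: "N \<bullet> N = 1" using assms by (simp add: dot_square_norm)
  define w where "w = u - (u \<bullet> X) *\<^sub>R X - (u \<bullet> Y) *\<^sub>R Y - (u \<bullet> N) *\<^sub>R N"
  have wX: "w \<bullet> X = 0" "w \<bullet> Y = 0" "w \<bullet> N = 0" unfolding w_def
    using XX NX NN assms(3) by (simp_all add: algebra_simps inner_commute)
  have "cross3 N w = 0" unfolding N_def cross_cross_expand using wX by (simp add: inner_commute)
  moreover have "N \<bullet> w = 0" using wX by (simp add: inner_commute)
  ultimately have "w \<bullet> w = 0" using norm_cross_dot[of N w] NN by (simp add: power_mult_distrib dot_square_norm[symmetric])
  then have "w = 0" by simp
  then have u: "u = (u \<bullet> X) *\<^sub>R X + (u \<bullet> Y) *\<^sub>R Y + (u \<bullet> N) *\<^sub>R N" unfolding w_def by (simp add: algebra_simps)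
  have "u \<bullet> v = ((u \<bullet> X) *\<^sub>R X + (u \<bullet> Y) *\<^sub>R Y + (u \<bullet> N) *\<^sub>R N) \<bullet> v" by (subst u) simp
  also have "\<dots> = (u \<bullet> X) * (v \<bullet> X) + (u \<bullet> Y) * (v \<bullet> Y) + (u \<bullet> N) * (v \<bullet> N)"
    by (simp add: inner_add_left inner_add_right inner_commute)
  finally show ?thesis unfolding N_def .
qed

lemma pdx_uminus: "f differentiable (at p) \<Longrightarrow> pdx (\<lambda>q. - f q) p = - pdx f p"
  for f :: "real \<times> real \<Rightarrow> real"
proof -
  assume a: "f differentiable (at p)"
  have d: "((\<lambda>x::real. -x) has_real_derivative -1) (at (f p))" by (auto intro!: derivative_eq_intros)
  show ?thesis using comp_step(2)[OF a d] by simp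
qed
lemma pdy_uminus: "f differentiable (at p) \<Longrightarrow> pdy (\<lambda>q. - f q) p = - pdy f p"
  for f :: "real \<times> real \<Rightarrow> real"
proof -
  assume a: "f differentiable (at p)"
  have d: "((\<lambda>x::real. -x) has_real_derivative -1) (at (f p))" by (auto intro!: derivative_eq_intros)
  show ?thesis using comp_step(3)[OF a d] by simp
qed

lemma structure_eqs:
  fixes U :: "(real \<times> real) set"
    and r X Y :: "real \<times> real \<Rightarrow> real^3"
    and A1 A2 H K :: "real \<times> real \<Rightarrow> real"
  assumes U: "open U"
    and sr: "smooth_on U r" and sX: "smooth_on U X" and sY: "smooth_on U Y"
    and sA1: "smooth_on U A1" and sA2: "smooth_on U A2" and sH: "smooth_on U H" and sK: "smooth_on U K"
    and frame: "\<forall>p\<in>U. norm (X p) = 1 \<and> norm (Y p) = 1 \<and> X p \<bullet> Y p = 0"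
    and regular: "\<forall>p\<in>U. A1 p \<noteq> 0 \<and> A2 p \<noteq> 0"
    and r_x: "\<forall>p\<in>U. pdx r p = A1 p *\<^sub>R X p"
    and r_y: "\<forall>p\<in>U. pdy r p = A2 p *\<^sub>R Y p"
    and N_x: "\<forall>p\<in>U. pdx (\<lambda>q. cross3 (X q) (Y q)) p = H p *\<^sub>R X p"
    and N_y: "\<forall>p\<in>U. pdy (\<lambda>q. cross3 (X q) (Y q)) p = K p *\<^sub>R Y p"
    and pU: "p \<in> U"
  shows "pdy H p * A2 p = pdy A1 p * K p"
    "pdx K p * A1 p = pdx A2 p * H p"
    "pdy (\<lambda>q. pdy A1 q / A2 q) p + pdx (\<lambda>q. pdx A2 q / A1 q) p + H p * K p = 0"
proof -
  define N where "N = (\<lambda>q. cross3 (X q) (Y q))"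
  note sd = smooth_diff_at[OF _ U]
  have dX: "X differentiable (at q)" "Y differentiable (at q)" "pdx X differentiable (at q)"
    "pdy X differentiable (at q)" "pdx Y differentiable (at q)" "pdy Y differentiable (at q)"
    "A1 differentiable (at q)" "A2 differentiable (at q)" "H differentiable (at q)" "K differentiable (at q)"
    if "q \<in> U" for q
    using that sX sY sA1 sA2 sH sK by (auto intro!: sd smooth_pdx smooth_pdy)
  have dN: "N differentiable (at q)" if "q \<in> U" for q
    unfolding N_def by (rule cross_differentiable) (use dX that in auto)
  have XX: "X q \<bullet> X q = 1" "Y q \<bullet> Y q = 1" "X q \<bullet> Y q = 0" "Y q \<bullet> X q = 0" if "q \<in> U" for q
    using frame that by (auto simp: dot_square_norm inner_commute)
  have XN: "X q \<bullet> N q = 0" "Y q \<bullet> N q = 0" for q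
    unfolding N_def by (simp_all add: dot_cross_self)
  have Nx: "pdx N q = H q *\<^sub>R X q" and Ny: "pdy N q = K q *\<^sub>R Y q" if "q \<in> U" for q
    using N_x N_y that unfolding N_def by auto
  have e1: "pdx X q \<bullet> X q = 0" if "q \<in> U" for q
    using dot_const_x[OF U that, of X X 1] XX[OF that] dX[OF that] XX by (simp add: inner_commute)
  have e2: "pdy X q \<bullet> X q = 0" if "q \<in> U" for q
    using dot_const_y[OF U that, of X X 1] XX[OF that] dX[OF that] XX by (simp add: inner_commute)
  have e3: "pdx Y q \<bullet> Y q = 0" if "q \<in> U" for q
    using dot_const_x[OF U that, of Y Y 1] XX[OF that] dX[OF that] XX by (simp add: inner_commute)
  have e4: "pdy Y q \<bullet> Y q = 0" if "q \<in> U" for q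
    using dot_const_y[OF U that, of Y Y 1] XX[OF that] dX[OF that] XX by (simp add: inner_commute)
  have e5: "pdx X q \<bullet> Y q + X q \<bullet> pdx Y q = 0" if "q \<in> U" for q
    using dot_const_x[OF U that, of X Y 0] dX[OF that] XX by simp
  have e6: "pdy X q \<bullet> Y q + X q \<bullet> pdy Y q = 0" if "q \<in> U" for q
    using dot_const_y[OF U that, of X Y 0] dX[OF that] XX by simp
  have e7: "pdx X q \<bullet> N q = - H q" if "q \<in> U" for q
    using dot_const_x[OF U that, of X N 0] dX[OF that] dN[OF that] XN Nx[OF that] XX[OF that] by simp
  have e8: "pdy X q \<bullet> N q = 0" if "q \<in> U" for q
    using dot_const_y[OF U that, of X N 0] dX[OF that] dN[OF that] XN Ny[OF that] XX[OF that] by simp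
  have e9: "pdx Y q \<bullet> N q = 0" if "q \<in> U" for q
    using dot_const_x[OF U that, of Y N 0] dX[OF that] dN[OF that] XN Nx[OF that] XX[OF that] by simp
  have e10: "pdy Y q \<bullet> N q = - K q" if "q \<in> U" for q
    using dot_const_y[OF U that, of Y N 0] dX[OF that] dN[OF that] XN Ny[OF that] XX[OF that] by simp
  have rr: "pdy A1 q *\<^sub>R X q + A1 q *\<^sub>R pdy X q = pdx A2 q *\<^sub>R Y q + A2 q *\<^sub>R pdx Y q" if "q \<in> U" for q
  proof -
    have "pdy (pdx r) q = pdy (\<lambda>q. A1 q *\<^sub>R X q) q"
      by (rule pdy_cong[OF U that]) (use r_x dX[OF that] in auto)
    also have "\<dots> = pdy A1 q *\<^sub>R X q + A1 q *\<^sub>R pdy X q" by (rule pdy_scaleR) (use dX[OF that] in auto)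
    finally have 1: "pdy (pdx r) q = pdy A1 q *\<^sub>R X q + A1 q *\<^sub>R pdy X q" .
    have "pdx (pdy r) q = pdx (\<lambda>q. A2 q *\<^sub>R Y q) q"
      by (rule pdx_cong[OF U that]) (use r_y dX[OF that] in auto)
    also have "\<dots> = pdx A2 q *\<^sub>R Y q + A2 q *\<^sub>R pdx Y q" by (rule pdx_scaleR) (use dX[OF that] in auto)
    finally have 2: "pdx (pdy r) q = pdx A2 q *\<^sub>R Y q + A2 q *\<^sub>R pdx Y q" .
    show ?thesis using 1 2 schwarz_vec[OF U that sr] by simp
  qed
  have rX: "pdy A1 q = A2 q * (X q \<bullet> pdx Y q)" if "q \<in> U" for q
  proof -
    have "(pdy A1 q *\<^sub>R X q + A1 q *\<^sub>R pdy X q) \<bullet> X q = (pdx A2 q *\<^sub>R Y q + A2 q *\<^sub>R pdx Y q) \<bullet> X q"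
      using rr[OF that] by simp
    then show ?thesis using XX[OF that] e2[OF that] by (simp add: inner_add_left inner_add_right inner_commute)
  qed
  have rY: "A1 q * (Y q \<bullet> pdy X q) = pdx A2 q" if "q \<in> U" for q
  proof -
    have "(pdy A1 q *\<^sub>R X q + A1 q *\<^sub>R pdy X q) \<bullet> Y q = (pdx A2 q *\<^sub>R Y q + A2 q *\<^sub>R pdx Y q) \<bullet> Y q"
      using rr[OF that] by simp
    then show ?thesis using XX[OF that] e3[OF that] by (simp add: inner_add_left inner_add_right inner_commute)
  qed
  have symX: "pdy (pdx X) p = pdx (pdy X) p" by (rule schwarz_vec[OF U pU sX])
  have symY: "pdy (pdx Y) p = pdx (pdy Y) p" by (rule schwarz_vec[OF U pU sY])
  have dXX: "pdy (pdx X) p \<bullet> N p = 0"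
    using dot_const_x[OF U pU, of "pdy X" N 0] e8 dX[OF pU] dN[OF pU] Nx[OF pU] e2[OF pU] symX by simp
  have Hy: "pdy H p = K p * (X p \<bullet> pdx Y p)"
  proof -
    have "pdy (\<lambda>q. pdx X q \<bullet> N q) p = pdy (\<lambda>q. - H q) p"
      by (rule pdy_cong[OF U pU]) (use e7 dX[OF pU] in auto)
    also have "\<dots> = - pdy H p" by (rule pdy_uminus) (use dX[OF pU] in auto)
    finally have "- pdy H p = pdy (pdx X) p \<bullet> N p + pdx X p \<bullet> pdy N p"
      using pdy_inner[of "pdx X" p N] dX[OF pU] dN[OF pU] by simp
    then have "- pdy H p = K p * (Y p \<bullet> pdx X p)" using dXX Ny[OF pU] by (simp add: inner_commute)
    moreover have "Y p \<bullet> pdx X p = - (X p \<bullet> pdx Y p)" using e5[OF pU] by (simp add: inner_commute)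
    ultimately show ?thesis by simp
  qed
  show "pdy H p * A2 p = pdy A1 p * K p" using Hy rX[OF pU] by simp
  have dYY: "pdx (pdy Y) p \<bullet> N p = 0"
    using dot_const_y[OF U pU, of "pdx Y" N 0] e9 dX[OF pU] dN[OF pU] Ny[OF pU] e3[OF pU] symY by simp
  have Kx: "pdx K p = H p * (Y p \<bullet> pdy X p)"
  proof -
    have "pdx (\<lambda>q. pdy Y q \<bullet> N q) p = pdx (\<lambda>q. - K q) p"
      by (rule pdx_cong[OF U pU]) (use e10 dX[OF pU] in auto)
    also have "\<dots> = - pdx K p" by (rule pdx_uminus) (use dX[OF pU] in auto)
    finally have "- pdx K p = pdx (pdy Y) p \<bullet> N p + pdy Y p \<bullet> pdx N p"
      using pdx_inner[of "pdy Y" p N] dX[OF pU] dN[OF pU] by simp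
    then have "- pdx K p = H p * (X p \<bullet> pdy Y p)" using dYY Nx[OF pU] by (simp add: inner_commute)
    moreover have "X p \<bullet> pdy Y p = - (Y p \<bullet> pdy X p)" using e6[OF pU] by (simp add: inner_commute)
    ultimately show ?thesis by simp
  qed
  have "pdx K p * A1 p = H p * (A1 p * (Y p \<bullet> pdy X p))" by (simp add: Kx algebra_simps)
  then show "pdx K p * A1 p = pdx A2 p * H p" using rY[OF pU] by simp
  have P: "pdy (\<lambda>q. pdy A1 q / A2 q) p = pdy X p \<bullet> pdx Y p + X p \<bullet> pdy (pdx Y) p"
  proof -
    have "pdy (\<lambda>q. pdy A1 q / A2 q) p = pdy (\<lambda>q. X q \<bullet> pdx Y q) p"
      by (rule pdy_cong[OF U pU]) (use rX regular dX[OF pU] in auto)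
    then show ?thesis using pdy_inner[of X p "pdx Y"] dX[OF pU] by simp
  qed
  have Q: "pdx (\<lambda>q. pdx A2 q / A1 q) p = pdx Y p \<bullet> pdy X p + Y p \<bullet> pdx (pdy X) p"
  proof -
    have "pdx (\<lambda>q. pdx A2 q / A1 q) p = pdx (\<lambda>q. Y q \<bullet> pdy X q) p"
      by (rule pdx_cong[OF U pU]) (use rY regular dX[OF pU] in \<open>auto simp: field_simps\<close>)
    then show ?thesis using pdx_inner[of Y p "pdy X"] dX[OF pU] by simp
  qed
  have E: "pdy (pdx X) p \<bullet> Y p + pdx X p \<bullet> pdy Y p + (pdy X p \<bullet> pdx Y p + X p \<bullet> pdy (pdx Y) p) = 0"
  proof -
    have "pdy (\<lambda>q. pdx X q \<bullet> Y q + X q \<bullet> pdx Y q) p = 0"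
      by (rule pdy_const_on[OF U pU]) (use e5 in auto)
    moreover have "pdy (\<lambda>q. pdx X q \<bullet> Y q + X q \<bullet> pdx Y q) p
        = pdy (\<lambda>q. pdx X q \<bullet> Y q) p + pdy (\<lambda>q. X q \<bullet> pdx Y q) p"
      by (rule binop_step(4)) (use dX[OF pU] in auto)
    ultimately show ?thesis using pdy_inner[of "pdx X" p Y] pdy_inner[of X p "pdx Y"] dX[OF pU] by simp
  qed
  have fr: "norm (X p) = 1" "norm (Y p) = 1" "X p \<bullet> Y p = 0" using frame pU by auto
  have par1: "pdx Y p \<bullet> pdy X p = 0"
    using frame_parseval[OF fr, of "pdx Y p" "pdy X p"] e2[OF pU] e3[OF pU] e8[OF pU] e9[OF pU]
    unfolding N_def by (simp add: inner_commute)
  have par2: "pdx X p \<bullet> pdy Y p = H p * K p"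
    using frame_parseval[OF fr, of "pdx X p" "pdy Y p"] e1[OF pU] e4[OF pU] e7[OF pU] e10[OF pU]
    unfolding N_def by (simp add: inner_commute)
  show "pdy (\<lambda>q. pdy A1 q / A2 q) p + pdx (\<lambda>q. pdx A2 q / A1 q) p + H p * K p = 0"
    using P Q E par1 par2 symX by (simp add: inner_commute)
qed



lemma alg_E:
  fixes a1 a2 hh k t1 t2 qn :: real
  assumes a1: "a1 \<noteq> 0" and a2: "a2 \<noteq> 0" and hh: "hh \<noteq> 0" and k: "k \<noteq> 0" and qn: "qn \<noteq> 0"
    and nu: "- hh / a1 \<noteq> - k / a2"
    and eq3: "(- hh / a1) * t1 + (- k / a2) * t2 + qn = 0"
    and fk1: "2 * (t2 * a1) * hh - qn * a1\<^sup>2 = - qn"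
    and fk2: "2 * (t1 * a2) * k - qn * a2\<^sup>2 = qn"
  shows "(hh * a2 - k * a1)\<^sup>2 = k * k + (-1) * (hh * hh)" "hh * a2 - k * a1 \<noteq> 0"
proof -
  have E1: "hh * a2 * t1 + k * a1 * t2 = qn * a1 * a2"
    using eq3 a1 a2 by (simp add: field_simps)
  have f1: "qn * a1\<^sup>2 = 2 * t2 * a1 * hh + qn" using fk1 by simp
  have f2: "qn * a2\<^sup>2 = 2 * t1 * a2 * k - qn" using fk2 by simp
  have "qn * (hh * a2 - k * a1)\<^sup>2 = hh\<^sup>2 * (qn * a2\<^sup>2) - 2 * hh * k * (qn * a1 * a2) + k\<^sup>2 * (qn * a1\<^sup>2)"
    by (simp add: power2_eq_square algebra_simps)
  also have "\<dots> = hh\<^sup>2 * (2 * t1 * a2 * k - qn) - 2 * hh * k * (hh * a2 * t1 + k * a1 * t2) + k\<^sup>2 * (2 * t2 * a1 * hh + qn)"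
    by (simp only: f1 f2 E1)
  also have "\<dots> = qn * (k * k + (-1) * (hh * hh))"
    by (simp add: power2_eq_square algebra_simps)
  finally have "qn * (hh * a2 - k * a1)\<^sup>2 = qn * (k * k + (-1) * (hh * hh))" .
  then show "(hh * a2 - k * a1)\<^sup>2 = k * k + (-1) * (hh * hh)" using qn by simp
  show "hh * a2 - k * a1 \<noteq> 0"
  proof
    assume "hh * a2 - k * a1 = 0"
    then have "hh / a1 = k / a2" using a1 a2 by (simp add: field_simps)
    then show False using nu by simp
  qed
qed

lemma alg_model:
  fixes a1 a2 hh k :: real
  assumes k: "k \<noteq> 0" and hh: "hh \<noteq> 0"
    and EE: "(hh * a2 - k * a1)\<^sup>2 = k * k + (-1) * (hh * hh)" and E0: "hh * a2 - k * a1 \<noteq> 0"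
  defines "D \<equiv> k * k + (-1) * (hh * hh)"
  defines "E \<equiv> hh * a2 + (-1) * (k * a1)"
  defines "\<kappa> \<equiv> k * inverse (sqrt (k * k))"
  defines "\<delta> \<equiv> E * inverse (sqrt D)"
  defines "s \<equiv> \<kappa> * \<delta>"
  defines "\<sigma> \<equiv> (-1) * (s * (hh * inverse (sqrt D)))"
  defines "c \<equiv> sqrt (\<sigma> * \<sigma> + 1)"
  defines "hv \<equiv> ((-1) * (s * a1) + (-1) * c) * inverse \<sigma>"
  defines "e \<equiv> sqrt D"
  shows "D > 0" "s * s = 1" "\<kappa> * \<kappa> = 1" "\<sigma> \<noteq> 0" "c > 0" "e > 0" "c * c = \<sigma> * \<sigma> + 1"
    "c + hv * \<sigma> = - s * a1" "\<sigma> + hv * c = \<kappa> * a2" "e * \<sigma> = - s * hh" "e * c = \<kappa> * k"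
proof -
  have Ee: "E = hh * a2 - k * a1" unfolding E_def by simp
  have DE: "D = E * E" using EE unfolding D_def Ee by (simp add: power2_eq_square)
  have "E \<noteq> 0" using E0 Ee by simp
  then show Dp: "D > 0" unfolding DE by (cases "E > 0") (auto intro: mult_pos_pos mult_neg_neg)
  have eE: "e = \<bar>E\<bar>" unfolding e_def DE by (simp add: real_sqrt_abs2 abs_mult[symmetric])
  show ep: "e > 0" using eE E0 Ee by simp
  have kk: "\<kappa> = k / \<bar>k\<bar>" unfolding \<kappa>_def by (simp add: divide_inverse)
  have "\<kappa> * \<kappa> = (k * k) / (\<bar>k\<bar> * \<bar>k\<bar>)" unfolding kk by simp
  then show kap: "\<kappa> * \<kappa> = 1" using k by (simp add: abs_mult_self_eq)
  have dd: "\<delta> = E / \<bar>E\<bar>" unfolding \<delta>_def using eE by (simp add: e_def divide_inverse)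
  have "\<delta> * \<delta> = (E * E) / (\<bar>E\<bar> * \<bar>E\<bar>)" unfolding dd by simp
  then have del: "\<delta> * \<delta> = 1" using E0 Ee by (simp add: abs_mult_self_eq)
  show ss: "s * s = 1" unfolding s_def using kap del by (simp add: algebra_simps)
  have s0: "s \<noteq> 0" using ss by auto
  have sig: "\<sigma> = - s * hh / e" unfolding \<sigma>_def e_def by (simp add: divide_inverse)
  show sg0: "\<sigma> \<noteq> 0" unfolding sig using s0 hh ep by simp
  show cp: "c > 0" unfolding c_def by (simp add: add_nonneg_pos)
  show cc: "c * c = \<sigma> * \<sigma> + 1" unfolding c_def by (simp add: add_nonneg_pos)
  show M3: "e * \<sigma> = - s * hh" unfolding sig using ep by simp
  have ee: "e * e = D" unfolding e_def using Dp by simp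
  have "(e * c) * (e * c) = k * k"
  proof -
    have "(e * c) * (e * c) = (e * e) * (c * c)" by (simp add: algebra_simps)
    also have "\<dots> = (e * \<sigma>) * (e * \<sigma>) + e * e" by (simp add: cc algebra_simps)
    also have "\<dots> = k * k" unfolding M3 ee using ss by (simp add: D_def algebra_simps)
    finally show ?thesis .
  qed
  then have "sqrt (k * k) = e * c" using ep cp by (intro real_sqrt_unique) (auto simp: power2_eq_square)
  then have "e * c = \<bar>k\<bar>" by simp
  moreover have "\<kappa> * k = \<bar>k\<bar>" unfolding kk using k by (simp add: field_simps abs_mult_self_eq)
  ultimately show M4: "e * c = \<kappa> * k" by simp
  show M1: "c + hv * \<sigma> = - s * a1" unfolding hv_def using sg0 by (simp add: field_simps)
  have "e * (\<sigma> + hv * c) = e * (\<kappa> * a2)"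
  proof -
    have "\<sigma> * (\<sigma> + hv * c) = \<sigma> * \<sigma> + (hv * \<sigma>) * c" by (simp add: algebra_simps)
    also have "\<dots> = \<sigma> * \<sigma> + (- s * a1 - c) * c"
    proof -
      have "hv * \<sigma> = - s * a1 - c" using M1 by linarith
      then show ?thesis by simp
    qed
    also have "\<dots> = -1 - s * a1 * c" using cc by (simp add: algebra_simps)
    finally have 1: "\<sigma> * (\<sigma> + hv * c) = -1 - s * a1 * c" .
    have "e * \<sigma> * (\<sigma> + hv * c) = e * (\<sigma> * (\<sigma> + hv * c))" by (simp add: mult.assoc)
    also have "\<dots> = e * (-1 - s * a1 * c)" by (simp only: 1)
    also have "\<dots> = - e - s * a1 * (e * c)" by (simp add: algebra_simps)
    also have "\<dots> = - e - s * a1 * (\<kappa> * k)" using M4 by simp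
    finally have 2: "- s * hh * (\<sigma> + hv * c) = - e - s * a1 * (\<kappa> * k)" using M3 by simp
    have es: "e = s * \<kappa> * E"
    proof -
      have "s * \<kappa> * E = \<delta> * E * (\<kappa> * \<kappa>)" unfolding s_def by (simp add: algebra_simps)
      also have "\<dots> = \<bar>E\<bar>" unfolding kap dd using E0 Ee by (simp add: field_simps abs_mult_self_eq)
      finally show ?thesis using eE by simp
    qed
    have "- e - s * a1 * (\<kappa> * k) = - s * hh * (\<kappa> * a2)" by (simp add: es Ee algebra_simps)
    then have "- s * hh * (\<sigma> + hv * c) = - s * hh * (\<kappa> * a2)" using 2 by simp
    then have "\<sigma> + hv * c = \<kappa> * a2" using s0 hh by simp
    then show ?thesis by simp
  qed
  then show "\<sigma> + hv * c = \<kappa> * a2" using ep by simp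
qed

lemma alg_T1:
  fixes c \<sigma> hv e \<kappa> a2 k t1 qn :: real
  assumes cc: "c * c = \<sigma> * \<sigma> + 1" and cp: "c > 0" and ep: "e > 0"
    and M2: "\<sigma> + hv * c = \<kappa> * a2" and M4: "e * c = \<kappa> * k" and kap: "\<kappa> * \<kappa> = 1"
    and a2: "a2 \<noteq> 0" and k: "k \<noteq> 0"
    and fk2: "2 * (t1 * a2) * k - qn * a2\<^sup>2 = qn"
  shows "t1 = qn * inverse e / 2 * ((2 * hv * \<sigma> + (1 + hv\<^sup>2) * c) / (\<sigma> + hv * c))"
proof -
  have k0: "\<kappa> \<noteq> 0" using kap by auto
  have num: "c * (2 * hv * \<sigma> + (1 + hv\<^sup>2) * c) = (\<kappa> * a2)\<^sup>2 + 1"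
    unfolding M2[symmetric] using cc by (simp add: power2_eq_square algebra_simps)
  have "e * c * \<kappa> = (\<kappa> * \<kappa>) * k" unfolding M4 by simp
  then have kk: "k = e * c * \<kappa>" using kap by simp
  have "qn * inverse e / 2 * ((2 * hv * \<sigma> + (1 + hv\<^sup>2) * c) / (\<sigma> + hv * c)) * (2 * a2 * k)
      = qn * (c * (2 * hv * \<sigma> + (1 + hv\<^sup>2) * c))"
    unfolding M2 kk using ep cp k0 a2 by (simp add: field_simps)
  also have "\<dots> = qn * (a2\<^sup>2 + 1)" unfolding num kap using kap
    by (simp add: power2_eq_square algebra_simps)
  also have "\<dots> = t1 * (2 * a2 * k)" using fk2 by (simp add: algebra_simps)
  finally have fin: "qn * inverse e / 2 * ((2 * hv * \<sigma> + (1 + hv\<^sup>2) * c) / (\<sigma> + hv * c)) * (2 * a2 * k) = t1 * (2 * a2 * k)" .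
  have m: "2 * a2 * k \<noteq> 0" using a2 k by simp
  from iffD1[OF mult_right_cancel[OF m] fin] show ?thesis by (rule sym)
qed

lemma alg_T2:
  fixes c \<sigma> hv e s a1 hh t2 qn :: real
  assumes cc: "c * c = \<sigma> * \<sigma> + 1" and sg: "\<sigma> \<noteq> 0" and ep: "e > 0"
    and M1: "c + hv * \<sigma> = - s * a1" and M3: "e * \<sigma> = - s * hh" and ss: "s * s = 1"
    and a1: "a1 \<noteq> 0" and hh: "hh \<noteq> 0"
    and fk1: "2 * (t2 * a1) * hh - qn * a1\<^sup>2 = - qn"
  shows "t2 = qn * inverse e / 2 * ((2 * hv * c + (1 + hv\<^sup>2) * \<sigma>) / (c + hv * \<sigma>))"
proof -
  have s0: "s \<noteq> 0" using ss by auto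
  have num: "\<sigma> * (2 * hv * c + (1 + hv\<^sup>2) * \<sigma>) = (- s * a1)\<^sup>2 - 1"
    unfolding M1[symmetric] using cc by (simp add: power2_eq_square algebra_simps)
  have "- s * (e * \<sigma>) = (s * s) * hh" unfolding M3 by simp
  then have hhe: "hh = - s * (e * \<sigma>)" using ss by simp
  have "qn * inverse e / 2 * ((2 * hv * c + (1 + hv\<^sup>2) * \<sigma>) / (c + hv * \<sigma>)) * (2 * a1 * hh)
      = qn * (\<sigma> * (2 * hv * c + (1 + hv\<^sup>2) * \<sigma>))"
  proof -
    have "e * inverse e = 1" using ep by simp
    then show ?thesis unfolding M1 hhe using ep sg s0 a1 by (simp add: field_simps)
  qed
  also have "\<dots> = qn * (a1\<^sup>2 - 1)" unfolding num ss using ss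
    by (simp add: power2_eq_square algebra_simps)
  also have "\<dots> = t2 * (2 * a1 * hh)" using fk1 by (simp add: algebra_simps)
  finally have fin: "qn * inverse e / 2 * ((2 * hv * c + (1 + hv\<^sup>2) * \<sigma>) / (c + hv * \<sigma>)) * (2 * a1 * hh) = t2 * (2 * a1 * hh)" .
  have m: "2 * a1 * hh \<noteq> 0" using a1 hh by simp
  from iffD1[OF mult_right_cancel[OF m] fin] show ?thesis by (rule sym)
qed

lemma alg_cod1:
  fixes s \<kappa> e S C \<xi>y ay hy h :: real
  assumes s: "s \<noteq> 0" and k: "\<kappa> \<noteq> 0" and e: "e > 0" and C: "C > 0" and S: "S \<noteq> 0"
    and eq: "(- s * (e * (\<xi>y * S + C * ay))) * (\<kappa> * (S + h * C))
           = (- s * (S * ay + (hy * S + h * (C * ay)))) * (\<kappa> * (e * C))"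
  shows "hy = (h + S / C) * \<xi>y"
proof -
  have "(- s * \<kappa> * e) * ((\<xi>y * S + C * ay) * (S + h * C))
      = (- s * \<kappa> * e) * ((S * ay + (hy * S + h * (C * ay))) * C)"
    using eq by (simp add: algebra_simps)
  then have "(\<xi>y * S + C * ay) * (S + h * C) = (S * ay + (hy * S + h * (C * ay))) * C"
    using s k e by simp
  then have "S * (\<xi>y * (S + h * C)) = S * (hy * C)" by (simp add: algebra_simps)
  then have "\<xi>y * (S + h * C) = hy * C" using S by simp
  then show ?thesis using C by (simp add: field_simps)
qed

lemma alg_cod2:
  fixes s \<kappa> e S C \<xi>x ax hx h :: real
  assumes s: "s \<noteq> 0" and k: "\<kappa> \<noteq> 0" and e: "e > 0" and C: "C > 0" and S: "S \<noteq> 0"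
    and eq: "(\<kappa> * (e * (\<xi>x * C + S * ax))) * (- s * (C + h * S))
           = (\<kappa> * (C * ax + (hx * C + h * (S * ax)))) * (- s * (e * S))"
  shows "hx = (h + C / S) * \<xi>x"
proof -
  have "(- s * \<kappa> * e) * ((\<xi>x * C + S * ax) * (C + h * S))
      = (- s * \<kappa> * e) * ((C * ax + (hx * C + h * (S * ax))) * S)"
    using eq by (simp add: algebra_simps)
  then have "(\<xi>x * C + S * ax) * (C + h * S) = (C * ax + (hx * C + h * (S * ax))) * S"
    using s k e by simp
  then have "C * (\<xi>x * (C + h * S)) = C * (hx * S)" by (simp add: algebra_simps)
  then have "\<xi>x * (C + h * S) = hx * S" using C by simp
  then show ?thesis using S by (simp add: field_simps)
qed

lemma alg_xi:
  fixes S C h hx hy ax ay \<xi>x \<xi>y \<xi>xy :: real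
  assumes S: "S \<noteq> 0" and C: "C > 0" and cc: "C * C = S * S + 1"
    and hy: "hy = (h + S / C) * \<xi>y" and hx: "hx = (h + C / S) * \<xi>x"
    and D: "(hy + (S * ay * S - C * (C * ay)) / (S * S)) * \<xi>x + (h + C / S) * \<xi>xy
          = (hx + (C * ax * C - S * (S * ax)) / (C * C)) * \<xi>y + (h + S / C) * \<xi>xy"
  shows "\<xi>xy = \<xi>x * \<xi>y + (C * ay / S) * \<xi>x + (S * ax / C) * \<xi>y"
proof -
  have C0: "C \<noteq> 0" using C by simp
  have hy': "hy * C = (h * C + S) * \<xi>y" using hy C0 by (simp add: field_simps)
  have hx': "hx * S = (h * S + C) * \<xi>x" using hx S by (simp add: field_simps)
  have P: "C * C * (hy * (S * S) + (S * ay * S - C * (C * ay))) * \<xi>x + S * (C * C) * (h * S + C) * \<xi>xy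
         = S * S * (hx * (C * C) + (C * ax * C - S * (S * ax))) * \<xi>y + S * S * C * (h * C + S) * \<xi>xy"
  proof -
    have "S * S * (C * C) * ((hy + (S * ay * S - C * (C * ay)) / (S * S)) * \<xi>x + (h + C / S) * \<xi>xy)
        = S * S * (C * C) * ((hx + (C * ax * C - S * (S * ax)) / (C * C)) * \<xi>y + (h + S / C) * \<xi>xy)"
      using D by simp
    moreover have "S * S * (C * C) * ((hy + (S * ay * S - C * (C * ay)) / (S * S)) * \<xi>x + (h + C / S) * \<xi>xy)
       = C * C * (hy * (S * S) + (S * ay * S - C * (C * ay))) * \<xi>x + S * (C * C) * (h * S + C) * \<xi>xy"
      using S C0 by (simp add: field_simps)
    moreover have "S * S * (C * C) * ((hx + (C * ax * C - S * (S * ax)) / (C * C)) * \<xi>y + (h + S / C) * \<xi>xy)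
       = S * S * (hx * (C * C) + (C * ax * C - S * (S * ax))) * \<xi>y + S * S * C * (h * C + S) * \<xi>xy"
      using S C0 by (simp add: field_simps)
    ultimately show ?thesis by simp
  qed
  have "S * C * \<xi>xy = S * C * \<xi>x * \<xi>y + C * C * ay * \<xi>x + S * S * ax * \<xi>y"
    using P hy' hx' cc by algebra
  then show ?thesis using S C0 by (simp add: field_simps)
qed

lemma LX: "f differentiable (at q) \<Longrightarrow> DERIV (\<lambda>t. f (t, snd q)) (fst q) :> pdx f q"
  for f :: "real \<times> real \<Rightarrow> real"
  using line_x_diff by (simp add: has_real_derivative_iff_has_vector_derivative)
lemma LY: "f differentiable (at q) \<Longrightarrow> DERIV (\<lambda>t. f (fst q, t)) (snd q) :> pdy f q"
  for f :: "real \<times> real \<Rightarrow> real"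
  using line_y_diff by (simp add: has_real_derivative_iff_has_vector_derivative)

lemma pdx_eqD:
  fixes f g :: "real \<times> real \<Rightarrow> real"
  assumes "open U" "q \<in> U" "\<And>x. x \<in> U \<Longrightarrow> f x = g x" "DERIV (\<lambda>t. g (t, snd q)) (fst q) :> D"
  shows "pdx f q = D"
  by (rule pdx_eqI[OF assms(1-3)]) (use assms(4) in \<open>unfold has_real_derivative_iff_has_vector_derivative\<close>)
lemma pdy_eqD:
  fixes f g :: "real \<times> real \<Rightarrow> real"
  assumes "open U" "q \<in> U" "\<And>x. x \<in> U \<Longrightarrow> f x = g x" "DERIV (\<lambda>t. g (fst q, t)) (snd q) :> D"
  shows "pdy f q = D"
  by (rule pdy_eqI[OF assms(1-3)]) (use assms(4) in \<open>unfold has_real_derivative_iff_has_vector_derivative\<close>)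

lemma unit_deriv:
  fixes f :: "real \<times> real \<Rightarrow> real"
  assumes U: "open U" and q: "q \<in> U" and fd: "f differentiable (at q)" and f1: "\<And>x. x \<in> U \<Longrightarrow> f x * f x = 1"
  shows "pdx f q = 0" "pdy f q = 0"
proof -
  have f0: "f q \<noteq> 0" using f1[OF q] by auto
  have "pdx (\<lambda>x. f x * f x) q = 0" by (rule pdx_const_on[OF U q]) (use f1 in auto)
  then have "2 * f q * pdx f q = 0" using binop_step(5)[OF fd fd] by (simp add: algebra_simps)
  then show "pdx f q = 0" using f0 by simp
  have "pdy (\<lambda>x. f x * f x) q = 0" by (rule pdy_const_on[OF U q]) (use f1 in auto)
  then have "2 * f q * pdy f q = 0" using binop_step(6)[OF fd fd] by (simp add: algebra_simps)
  then show "pdy f q = 0" using f0 by simp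
qed

lemma exp_half_ln: "x > 0 \<Longrightarrow> exp (ln x * (1/2)) = sqrt (x::real)"
proof -
  assume x: "x > 0"
  have "exp (ln x * (1/2)) = x powr (1/2)" using x by (simp add: powr_def mult.commute)
  also have "\<dots> = sqrt x" using x by (simp add: powr_half_sqrt)
  finally show ?thesis .
qed

lemma ln_abs_eq: "ln \<bar>x\<bar> = ln (x * x) / 2" for x :: real
proof (cases "x = 0")
  case True then show ?thesis by simp
next
  case False
  have xx: "x * x = \<bar>x\<bar> * \<bar>x\<bar>" by (simp add: abs_mult_self_eq)
  have "ln (x * x) = ln (\<bar>x\<bar> * \<bar>x\<bar>)" by (simp only: xx)
  also have "\<dots> = ln \<bar>x\<bar> + ln \<bar>x\<bar>" by (rule ln_mult_pos) (use False in auto)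
  finally show ?thesis by simp
qed



lemma alg_P:
  fixes s \<kappa> S C h hy ay \<xi>y a1y a2 :: real
  assumes C: "C > 0" and kap: "\<kappa> * \<kappa> = 1" and a2: "a2 \<noteq> 0"
    and A1y: "a1y = - s * (S * ay + (hy * S + h * (C * ay)))"
    and A2: "a2 = \<kappa> * (S + h * C)" and hy: "hy = (h + S / C) * \<xi>y"
  shows "a1y / a2 = - (s * \<kappa>) * (ay + \<xi>y * (S / C))"
proof -
  have C0: "C \<noteq> 0" using C by simp
  have "a1y = - s * ((S + h * C) * (ay + \<xi>y * (S / C)))"
    unfolding A1y hy using C0 by (simp add: field_simps)
  also have "\<dots> = - s * (\<kappa> * \<kappa>) * ((S + h * C) * (ay + \<xi>y * (S / C)))" using kap by simp
  also have "\<dots> = - (s * \<kappa>) * (ay + \<xi>y * (S / C)) * (\<kappa> * (S + h * C))" by (simp only: mult_ac mult_minus_left mult_minus_right)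
  finally have "a1y = - (s * \<kappa>) * (ay + \<xi>y * (S / C)) * a2" unfolding A2 .
  then show ?thesis using a2 by simp
qed

lemma alg_Q:
  fixes s \<kappa> S C h hx ax \<xi>x a2x a1 :: real
  assumes S: "S \<noteq> 0" and ss: "s * s = 1" and a1: "a1 \<noteq> 0"
    and A2x: "a2x = \<kappa> * (C * ax + (hx * C + h * (S * ax)))"
    and A1: "a1 = - s * (C + h * S)" and hx: "hx = (h + C / S) * \<xi>x"
  shows "a2x / a1 = - (s * \<kappa>) * (ax + \<xi>x * (C / S))"
proof -
  have "a2x = \<kappa> * ((C + h * S) * (ax + \<xi>x * (C / S)))"
    unfolding A2x hx using S by (simp add: field_simps)
  also have "\<dots> = (s * s) * \<kappa> * ((C + h * S) * (ax + \<xi>x * (C / S)))" using ss by simp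
  also have "\<dots> = - (s * \<kappa>) * (ax + \<xi>x * (C / S)) * (- s * (C + h * S))" by (simp only: mult_ac mult_minus_left mult_minus_right minus_minus)
  finally have "a2x = - (s * \<kappa>) * (ax + \<xi>x * (C / S)) * a1" unfolding A1 .
  then show ?thesis using a1 by simp
qed




lemma diff_sinh: "f differentiable (at q) \<Longrightarrow> (\<lambda>x. sinh (f x)) differentiable (at q)"
  for f :: "real \<times> real \<Rightarrow> real"
proof -
  assume a: "f differentiable (at q)"
  have "((\<lambda>x. sinh x) has_real_derivative cosh (f q) * 1) (at (f q))"
    by (rule has_field_derivative_sinh[OF DERIV_ident])
  from comp_step(1)[OF a this] show ?thesis .
qed

lemma diff_cosh: "f differentiable (at q) \<Longrightarrow> (\<lambda>x. cosh (f x)) differentiable (at q)"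
  for f :: "real \<times> real \<Rightarrow> real"
proof -
  assume a: "f differentiable (at q)"
  have "((\<lambda>x. cosh x) has_real_derivative sinh (f q) * 1) (at (f q))"
    by (rule has_field_derivative_cosh[OF DERIV_ident])
  from comp_step(1)[OF a this] show ?thesis .
qed

lemma sq_sign: "a * a = 1 \<Longrightarrow> (- a * x)\<^sup>2 = x\<^sup>2" "a * a = 1 \<Longrightarrow> (a * x)\<^sup>2 = x\<^sup>2" for a x :: real
  by (simp_all add: power_mult_distrib power2_eq_square)

theorem mainTheorem1:
  fixes U :: "(real \<times> real) set"
    and r X Y :: "real \<times> real \<Rightarrow> real^3"
    and A1 A2 H K T1 T2 :: "real \<times> real \<Rightarrow> real"
    and qn :: real
  assumes U_open: "open U"
    and smooth_vec: "smooth_on U r" "smooth_on U X" "smooth_on U Y"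
    and smooth_scal: "smooth_on U A1" "smooth_on U A2" "smooth_on U H" "smooth_on U K"
                     "smooth_on U T1" "smooth_on U T2"
    and frame: "\<forall>p\<in>U. norm (X p) = 1 \<and> norm (Y p) = 1 \<and> X p \<bullet> Y p = 0"
    and regular: "\<forall>p\<in>U. A1 p \<noteq> 0 \<and> A2 p \<noteq> 0"
    and r_x: "\<forall>p\<in>U. pdx r p = A1 p *\<^sub>R X p"
    and r_y: "\<forall>p\<in>U. pdy r p = A2 p *\<^sub>R Y p"
    and N_x: "\<forall>p\<in>U. pdx (\<lambda>q. cross3 (X q) (Y q)) p = H p *\<^sub>R X p"
    and N_y: "\<forall>p\<in>U. pdy (\<lambda>q. cross3 (X q) (Y q)) p = K p *\<^sub>R Y p"
    and III_nondeg: "\<forall>p\<in>U. H p \<noteq> 0 \<and> K p \<noteq> 0"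
    and no_umbilic: "\<forall>p\<in>U. - H p / A1 p \<noteq> - K p / A2 p"
    and qn_nz: "qn \<noteq> 0"
    and equil1: "\<forall>p\<in>U. pdx T1 p + (pdx A1 p / A1 p) * (T1 p - T2 p) = 0"
    and equil2: "\<forall>p\<in>U. pdy T2 p + (pdy A2 p / A2 p) * (T2 p - T1 p) = 0"
    and equil3: "\<forall>p\<in>U. (- H p / A1 p) * T1 p + (- K p / A2 p) * T2 p + qn = 0"
    and first_kind1: "\<forall>p\<in>U. 2 * (T2 p * A1 p) * H p - qn * (A1 p)\<^sup>2 = - qn"
    and first_kind2: "\<forall>p\<in>U. 2 * (T1 p * A2 p) * K p - qn * (A2 p)\<^sup>2 = qn"
  shows "\<exists>h \<alpha> \<xi> :: real \<times> real \<Rightarrow> real.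
           smooth_on U h \<and> smooth_on U \<alpha> \<and> smooth_on U \<xi> \<and>
           (\<forall>p\<in>U.
              (A1 p)\<^sup>2 = (cosh (\<alpha> p) + h p * sinh (\<alpha> p))\<^sup>2 \<and>
              (A2 p)\<^sup>2 = (sinh (\<alpha> p) + h p * cosh (\<alpha> p))\<^sup>2 \<and>
              (H p)\<^sup>2 = exp (2 * \<xi> p) * (sinh (\<alpha> p))\<^sup>2 \<and>
              (K p)\<^sup>2 = exp (2 * \<xi> p) * (cosh (\<alpha> p))\<^sup>2 \<and>
              pdx h p = (h p + cosh (\<alpha> p) / sinh (\<alpha> p)) * pdx \<xi> p \<and>
              pdy h p = (h p + tanh (\<alpha> p)) * pdy \<xi> p \<and>
              pdy (pdx \<xi>) p = pdx \<xi> p * pdy \<xi> p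
                 + pdy (\<lambda>q. ln \<bar>sinh (\<alpha> q)\<bar>) p * pdx \<xi> p
                 + pdx (\<lambda>q. ln (cosh (\<alpha> q))) p * pdy \<xi> p \<and>
              pdx (\<lambda>q. pdx \<alpha> q + pdx \<xi> q * (cosh (\<alpha> q) / sinh (\<alpha> q))) p
                 + pdy (\<lambda>q. pdy \<alpha> q + pdy \<xi> q * tanh (\<alpha> q)) p
                 + exp (2 * \<xi> p) * sinh (\<alpha> p) * cosh (\<alpha> p) = 0 \<and>
              T1 p = qn * exp (- \<xi> p) / 2 *
                 ((2 * h p * sinh (\<alpha> p) + (1 + (h p)\<^sup>2) * cosh (\<alpha> p))
                  / (sinh (\<alpha> p) + h p * cosh (\<alpha> p))) \<and>
              T2 p = qn * exp (- \<xi> p) / 2 *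
                 ((2 * h p * cosh (\<alpha> p) + (1 + (h p)\<^sup>2) * sinh (\<alpha> p))
                  / (cosh (\<alpha> p) + h p * sinh (\<alpha> p))))"
proof -
  note U = U_open
  define D where "D = (\<lambda>q. K q * K q + (-1) * (H q * H q))"
  define E where "E = (\<lambda>q. H q * A2 q + (-1) * (K q * A1 q))"
  define \<kappa> where "\<kappa> = (\<lambda>q. K q * inverse (sqrt (K q * K q)))"
  define \<delta> where "\<delta> = (\<lambda>q. E q * inverse (sqrt (D q)))"
  define s where "s = (\<lambda>q. \<kappa> q * \<delta> q)"
  define \<sigma> where "\<sigma> = (\<lambda>q. (-1) * (s q * (H q * inverse (sqrt (D q)))))"
  define \<xi> where "\<xi> = (\<lambda>q. ln (D q) * (1/2))"
  define \<alpha> where "\<alpha> = (\<lambda>q. arsinh (\<sigma> q))"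
  define h where "h = (\<lambda>q. ((-1) * (s q * A1 q) + (-1) * sqrt (\<sigma> q * \<sigma> q + 1)) * inverse (\<sigma> q))"
  have MOD: "D q > 0 \<and> s q * s q = 1 \<and> \<kappa> q * \<kappa> q = 1 \<and> \<sigma> q \<noteq> 0 \<and>
      cosh (\<alpha> q) > 0 \<and> exp (\<xi> q) > 0 \<and> cosh (\<alpha> q) * cosh (\<alpha> q) = sinh (\<alpha> q) * sinh (\<alpha> q) + 1 \<and>
      cosh (\<alpha> q) + h q * sinh (\<alpha> q) = - s q * A1 q \<and>
      sinh (\<alpha> q) + h q * cosh (\<alpha> q) = \<kappa> q * A2 q \<and>
      exp (\<xi> q) * sinh (\<alpha> q) = - s q * H q \<and>
      exp (\<xi> q) * cosh (\<alpha> q) = \<kappa> q * K q \<and> sinh (\<alpha> q) = \<sigma> q" if q: "q \<in> U" for q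
  proof -
    have a: "A1 q \<noteq> 0" "A2 q \<noteq> 0" "H q \<noteq> 0" "K q \<noteq> 0" using regular III_nondeg q by auto
    note ae = alg_E[OF a qn_nz, of "T1 q" "T2 q"]
    have ae1: "(H q * A2 q - K q * A1 q)\<^sup>2 = K q * K q + - 1 * (H q * H q)"
      "H q * A2 q - K q * A1 q \<noteq> 0"
      using ae no_umbilic equil3 first_kind1 first_kind2 q by auto
    note am = alg_model[OF a(4) a(3) ae1]
    have sa: "sinh (\<alpha> q) = \<sigma> q" unfolding \<alpha>_def by simp
    have ca: "cosh (\<alpha> q) = sqrt (\<sigma> q * \<sigma> q + 1)" unfolding \<alpha>_def by (simp add: cosh_arsinh_real power2_eq_square)
    have Dp: "D q > 0" using am(1) unfolding D_def by simp
    have ex: "exp (\<xi> q) = sqrt (D q)" unfolding \<xi>_def using Dp by (rule exp_half_ln)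
    show ?thesis unfolding sa ca ex using am
      unfolding D_def E_def \<kappa>_def \<delta>_def s_def \<sigma>_def h_def by simp
  qed
  have sb: "smc U A1" "smc U A2" "smc U H" "smc U K"
    using smooth_scal by (auto intro: smc_base)
  have KK: "\<forall>q\<in>U. K q * K q > 0" using III_nondeg by (auto simp: zero_less_mult_iff)
  have Dpos: "\<forall>q\<in>U. D q > 0" using MOD by blast
  have smD: "smc U D" unfolding D_def using sb by (intro smc_add smc_mult smc_const)
  have smE: "smc U E" unfolding E_def using sb by (intro smc_add smc_mult smc_const)
  have smk: "smc U \<kappa>" unfolding \<kappa>_def
    by (intro smc_mult smc_inv smc_sqrt sb) (use KK in auto)
  have smd: "smc U \<delta>" unfolding \<delta>_def
    by (intro smc_mult smc_inv smc_sqrt smE smD) (use Dpos in auto)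
  have sms: "smc U s" unfolding s_def using smk smd by (rule smc_mult)
  have smsig: "smc U \<sigma>" unfolding \<sigma>_def
    by (intro smc_mult smc_inv smc_sqrt smc_const sms smD sb) (use Dpos in auto)
  have sigNZ: "\<forall>q\<in>U. \<sigma> q \<noteq> 0" using MOD by blast
  have smxi: "smc U \<xi>" unfolding \<xi>_def
    by (intro smc_mult smc_ln smc_const smD) (use Dpos in auto)
  have smal: "smc U \<alpha>" unfolding \<alpha>_def by (intro smc_arsinh smsig)
  have smh: "smc U h" unfolding h_def
    by (intro smc_mult smc_add smc_inv smc_sqrt smc_const sms smsig sb)
       (use sigNZ in \<open>auto intro: add_nonneg_pos\<close>)
  define m where "m = (\<lambda>q. (-1) * (s q * \<kappa> q))"
  have smm: "smc U m" unfolding m_def by (intro smc_mult smc_const sms smk)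
  have Sxi: "smooth_on U \<xi>" and Sal: "smooth_on U \<alpha>" and Sh: "smooth_on U h"
    and Ss: "smooth_on U s" and Sk: "smooth_on U \<kappa>" and Sm: "smooth_on U m"
    using smc_smooth[OF U] smxi smal smh sms smk smm by auto
  note sd = smooth_diff_at[OF _ U]
  have dd: "\<alpha> differentiable (at q)" "h differentiable (at q)" "\<xi> differentiable (at q)"
    "s differentiable (at q)" "\<kappa> differentiable (at q)" "m differentiable (at q)"
    "pdx \<alpha> differentiable (at q)" "pdy \<alpha> differentiable (at q)"
    "pdx \<xi> differentiable (at q)" "pdy \<xi> differentiable (at q)"
    "pdx h differentiable (at q)" "pdy h differentiable (at q)" if "q \<in> U" for q
    using that Sxi Sal Sh Ss Sk Sm by (auto intro!: sd smooth_pdx smooth_pdy)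
  have ss1: "s x * s x = 1" "\<kappa> x * \<kappa> x = 1" "m x * m x = 1" if "x \<in> U" for x
    using MOD[OF that] unfolding m_def by (auto simp: algebra_simps)
  have d0: "pdx s q = 0" "pdy s q = 0" "pdx \<kappa> q = 0" "pdy \<kappa> q = 0" "pdx m q = 0" "pdy m q = 0"
    if q: "q \<in> U" for q
    using unit_deriv[OF U q dd(4)[OF q] ss1(1)] unit_deriv[OF U q dd(5)[OF q] ss1(2)]
      unit_deriv[OF U q dd(6)[OF q] ss1(3)] by auto
  have R: "A1 x = - s x * (cosh (\<alpha> x) + h x * sinh (\<alpha> x))"
    "A2 x = \<kappa> x * (sinh (\<alpha> x) + h x * cosh (\<alpha> x))"
    "H x = - s x * (exp (\<xi> x) * sinh (\<alpha> x))"
    "K x = \<kappa> x * (exp (\<xi> x) * cosh (\<alpha> x))" if x: "x \<in> U" for x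
  proof -
    from MOD[OF x] have m: "s x * s x = 1" "\<kappa> x * \<kappa> x = 1"
      "cosh (\<alpha> x) + h x * sinh (\<alpha> x) = - s x * A1 x"
      "sinh (\<alpha> x) + h x * cosh (\<alpha> x) = \<kappa> x * A2 x"
      "exp (\<xi> x) * sinh (\<alpha> x) = - s x * H x"
      "exp (\<xi> x) * cosh (\<alpha> x) = \<kappa> x * K x" by auto
    show "A1 x = - s x * (cosh (\<alpha> x) + h x * sinh (\<alpha> x))" unfolding m(3)
      using m(1) by (simp add: mult.assoc[symmetric])
    show "A2 x = \<kappa> x * (sinh (\<alpha> x) + h x * cosh (\<alpha> x))" unfolding m(4)
      using m(2) by (simp add: mult.assoc[symmetric])
    show "H x = - s x * (exp (\<xi> x) * sinh (\<alpha> x))" unfolding m(5)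
      using m(1) by (simp add: mult.assoc[symmetric])
    show "K x = \<kappa> x * (exp (\<xi> x) * cosh (\<alpha> x))" unfolding m(6)
      using m(2) by (simp add: mult.assoc[symmetric])
  qed
  have A1y: "pdy A1 q = - s q * (sinh (\<alpha> q) * pdy \<alpha> q + (pdy h q * sinh (\<alpha> q) + h q * (cosh (\<alpha> q) * pdy \<alpha> q)))"
    if q: "q \<in> U" for q
    by (rule pdy_eqD[OF U q R(1)], assumption)
       (auto intro!: derivative_eq_intros LY[OF dd(1)[OF q]] LY[OF dd(2)[OF q]] LY[OF dd(4)[OF q]]
         simp: d0[OF q] algebra_simps)
  have Hy: "pdy H q = - s q * (exp (\<xi> q) * (pdy \<xi> q * sinh (\<alpha> q) + cosh (\<alpha> q) * pdy \<alpha> q))"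
    if q: "q \<in> U" for q
    by (rule pdy_eqD[OF U q R(3)], assumption)
       (auto intro!: derivative_eq_intros LY[OF dd(1)[OF q]] LY[OF dd(3)[OF q]] LY[OF dd(4)[OF q]]
         simp: d0[OF q] algebra_simps)
  have Kx: "pdx K q = \<kappa> q * (exp (\<xi> q) * (pdx \<xi> q * cosh (\<alpha> q) + sinh (\<alpha> q) * pdx \<alpha> q))"
    if q: "q \<in> U" for q
    by (rule pdx_eqD[OF U q R(4)], assumption)
       (auto intro!: derivative_eq_intros LX[OF dd(1)[OF q]] LX[OF dd(3)[OF q]] LX[OF dd(5)[OF q]]
         simp: d0[OF q] algebra_simps)
  have A2x: "pdx A2 q = \<kappa> q * (cosh (\<alpha> q) * pdx \<alpha> q + (pdx h q * cosh (\<alpha> q) + h q * (sinh (\<alpha> q) * pdx \<alpha> q)))"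
    if q: "q \<in> U" for q
    by (rule pdx_eqD[OF U q R(2)], assumption)
       (auto intro!: derivative_eq_intros LX[OF dd(1)[OF q]] LX[OF dd(2)[OF q]] LX[OF dd(5)[OF q]]
         simp: d0[OF q] algebra_simps)
  note SE = structure_eqs[OF U smooth_vec smooth_scal(1-4) frame regular r_x r_y N_x N_y]
  have nz: "s q \<noteq> 0" "\<kappa> q \<noteq> 0" "exp (\<xi> q) > 0" "cosh (\<alpha> q) > 0" "sinh (\<alpha> q) \<noteq> 0" if q: "q \<in> U" for q
    using MOD[OF q] by auto
  have hy: "pdy h q = (h q + sinh (\<alpha> q) / cosh (\<alpha> q)) * pdy \<xi> q" if q: "q \<in> U" for q
  proof (rule alg_cod1[OF nz[OF q]])
    show "(- s q * (exp (\<xi> q) * (pdy \<xi> q * sinh (\<alpha> q) + cosh (\<alpha> q) * pdy \<alpha> q))) *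
        (\<kappa> q * (sinh (\<alpha> q) + h q * cosh (\<alpha> q))) =
        (- s q * (sinh (\<alpha> q) * pdy \<alpha> q + (pdy h q * sinh (\<alpha> q) + h q * (cosh (\<alpha> q) * pdy \<alpha> q)))) *
        (\<kappa> q * (exp (\<xi> q) * cosh (\<alpha> q)))"
      using SE(1)[OF q] unfolding Hy[OF q] A1y[OF q] R(2)[OF q] R(4)[OF q] .
  qed
  have hx: "pdx h q = (h q + cosh (\<alpha> q) / sinh (\<alpha> q)) * pdx \<xi> q" if q: "q \<in> U" for q
  proof (rule alg_cod2[OF nz[OF q]])
    show "(\<kappa> q * (exp (\<xi> q) * (pdx \<xi> q * cosh (\<alpha> q) + sinh (\<alpha> q) * pdx \<alpha> q))) *
        (- s q * (cosh (\<alpha> q) + h q * sinh (\<alpha> q))) =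
        (\<kappa> q * (cosh (\<alpha> q) * pdx \<alpha> q + (pdx h q * cosh (\<alpha> q) + h q * (sinh (\<alpha> q) * pdx \<alpha> q)))) *
        (- s q * (exp (\<xi> q) * sinh (\<alpha> q)))"
      using SE(2)[OF q] unfolding Kx[OF q] A2x[OF q] R(1)[OF q] R(3)[OF q] .
  qed
  have main: "(A1 p)\<^sup>2 = (cosh (\<alpha> p) + h p * sinh (\<alpha> p))\<^sup>2 \<and>
              (A2 p)\<^sup>2 = (sinh (\<alpha> p) + h p * cosh (\<alpha> p))\<^sup>2 \<and>
              (H p)\<^sup>2 = exp (2 * \<xi> p) * (sinh (\<alpha> p))\<^sup>2 \<and>
              (K p)\<^sup>2 = exp (2 * \<xi> p) * (cosh (\<alpha> p))\<^sup>2 \<and>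
              pdx h p = (h p + cosh (\<alpha> p) / sinh (\<alpha> p)) * pdx \<xi> p \<and>
              pdy h p = (h p + tanh (\<alpha> p)) * pdy \<xi> p \<and>
              pdy (pdx \<xi>) p = pdx \<xi> p * pdy \<xi> p
                 + pdy (\<lambda>q. ln \<bar>sinh (\<alpha> q)\<bar>) p * pdx \<xi> p
                 + pdx (\<lambda>q. ln (cosh (\<alpha> q))) p * pdy \<xi> p \<and>
              pdx (\<lambda>q. pdx \<alpha> q + pdx \<xi> q * (cosh (\<alpha> q) / sinh (\<alpha> q))) p
                 + pdy (\<lambda>q. pdy \<alpha> q + pdy \<xi> q * tanh (\<alpha> q)) p
                 + exp (2 * \<xi> p) * sinh (\<alpha> p) * cosh (\<alpha> p) = 0 \<and>
              T1 p = qn * exp (- \<xi> p) / 2 *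
                 ((2 * h p * sinh (\<alpha> p) + (1 + (h p)\<^sup>2) * cosh (\<alpha> p))
                  / (sinh (\<alpha> p) + h p * cosh (\<alpha> p))) \<and>
              T2 p = qn * exp (- \<xi> p) / 2 *
                 ((2 * h p * cosh (\<alpha> p) + (1 + (h p)\<^sup>2) * sinh (\<alpha> p))
                  / (cosh (\<alpha> p) + h p * sinh (\<alpha> p)))" if p: "p \<in> U" for p
  proof (intro conjI)
    note M = MOD[OF p]
    have e2: "exp (2 * \<xi> p) = exp (\<xi> p) * exp (\<xi> p)" by (simp only: mult_2 exp_add)
    show "(A1 p)\<^sup>2 = (cosh (\<alpha> p) + h p * sinh (\<alpha> p))\<^sup>2"
      unfolding R(1)[OF p] using sq_sign(1) ss1(1)[OF p] by simp
    show "(A2 p)\<^sup>2 = (sinh (\<alpha> p) + h p * cosh (\<alpha> p))\<^sup>2"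
      unfolding R(2)[OF p] using sq_sign(2) ss1(2)[OF p] by simp
    show "(H p)\<^sup>2 = exp (2 * \<xi> p) * (sinh (\<alpha> p))\<^sup>2"
      unfolding R(3)[OF p] e2 using sq_sign(1) ss1(1)[OF p] by (simp add: power_mult_distrib power2_eq_square)
    show "(K p)\<^sup>2 = exp (2 * \<xi> p) * (cosh (\<alpha> p))\<^sup>2"
      unfolding R(4)[OF p] e2 using sq_sign(2) ss1(2)[OF p] by (simp add: power_mult_distrib power2_eq_square)
    show "pdx h p = (h p + cosh (\<alpha> p) / sinh (\<alpha> p)) * pdx \<xi> p" by (rule hx[OF p])
    show "pdy h p = (h p + tanh (\<alpha> p)) * pdy \<xi> p" using hy[OF p] by (simp add: tanh_def)
    show "T1 p = qn * exp (- \<xi> p) / 2 *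
                 ((2 * h p * sinh (\<alpha> p) + (1 + (h p)\<^sup>2) * cosh (\<alpha> p))
                  / (sinh (\<alpha> p) + h p * cosh (\<alpha> p)))"
      unfolding exp_minus
      by (rule alg_T1) (use M regular III_nondeg first_kind2 p in auto)
    show "T2 p = qn * exp (- \<xi> p) / 2 *
                 ((2 * h p * cosh (\<alpha> p) + (1 + (h p)\<^sup>2) * sinh (\<alpha> p))
                  / (cosh (\<alpha> p) + h p * sinh (\<alpha> p)))"
      unfolding exp_minus
      by (rule alg_T2) (use M regular III_nondeg first_kind1 p in auto)
    show "pdy (pdx \<xi>) p = pdx \<xi> p * pdy \<xi> p
                 + pdy (\<lambda>q. ln \<bar>sinh (\<alpha> q)\<bar>) p * pdx \<xi> p
                 + pdx (\<lambda>q. ln (cosh (\<alpha> q))) p * pdy \<xi> p"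
    proof -
      have S0: "sinh (\<alpha> p) \<noteq> 0" and C0: "cosh (\<alpha> p) > 0" and cc: "cosh (\<alpha> p) * cosh (\<alpha> p) = sinh (\<alpha> p) * sinh (\<alpha> p) + 1"
        using M by auto
      have C1: "cosh (\<alpha> p) \<noteq> 0" using C0 by simp
      have a0: "\<alpha> p \<noteq> 0" using S0 by auto
      have sp: "sinh (\<alpha> p) * sinh (\<alpha> p) > 0" using S0 not_real_square_gt_zero by blast
      have sxi: "pdy (pdx \<xi>) p = pdx (pdy \<xi>) p" by (rule schwarz[OF U p Sxi])
      have shh: "pdy (pdx h) p = pdx (pdy h) p" by (rule schwarz[OF U p Sh])
      have D1: "pdy (pdx h) p = (pdy h p + (sinh (\<alpha> p) * pdy \<alpha> p * sinh (\<alpha> p) - cosh (\<alpha> p) * (cosh (\<alpha> p) * pdy \<alpha> p)) / (sinh (\<alpha> p) * sinh (\<alpha> p))) * pdx \<xi> p + (h p + cosh (\<alpha> p) / sinh (\<alpha> p)) * pdy (pdx \<xi>) p"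
        by (rule pdy_eqD[OF U p hx], assumption)
           (auto intro!: derivative_eq_intros LY[OF dd(1)[OF p]] LY[OF dd(2)[OF p]] LY[OF dd(9)[OF p]]
             simp: S0 a0 field_simps)
      have D2: "pdx (pdy h) p = (pdx h p + (cosh (\<alpha> p) * pdx \<alpha> p * cosh (\<alpha> p) - sinh (\<alpha> p) * (sinh (\<alpha> p) * pdx \<alpha> p)) / (cosh (\<alpha> p) * cosh (\<alpha> p))) * pdy \<xi> p + (h p + sinh (\<alpha> p) / cosh (\<alpha> p)) * pdx (pdy \<xi>) p"
        by (rule pdx_eqD[OF U p hy], assumption)
           (auto intro!: derivative_eq_intros LX[OF dd(1)[OF p]] LX[OF dd(2)[OF p]] LX[OF dd(10)[OF p]]
             simp: C1 field_simps)
      have L1: "pdy (\<lambda>q. ln \<bar>sinh (\<alpha> q)\<bar>) p = cosh (\<alpha> p) * pdy \<alpha> p / sinh (\<alpha> p)"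
        by (rule pdy_eqD[OF U p, of _ "\<lambda>q. ln (sinh (\<alpha> q) * sinh (\<alpha> q)) / 2"], rule ln_abs_eq)
           (auto intro!: derivative_eq_intros LY[OF dd(1)[OF p]] simp: sp S0 field_simps)
      have L2: "pdx (\<lambda>q. ln (cosh (\<alpha> q))) p = sinh (\<alpha> p) * pdx \<alpha> p / cosh (\<alpha> p)"
        by (rule pdx_eqD[OF U p, of _ "\<lambda>q. ln (cosh (\<alpha> q))"], rule refl)
           (auto intro!: derivative_eq_intros LX[OF dd(1)[OF p]] simp: C1 field_simps)
      have "pdy (pdx \<xi>) p = pdx \<xi> p * pdy \<xi> p + (cosh (\<alpha> p) * pdy \<alpha> p / sinh (\<alpha> p)) * pdx \<xi> p
            + (sinh (\<alpha> p) * pdx \<alpha> p / cosh (\<alpha> p)) * pdy \<xi> p"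
      proof (rule alg_xi[OF S0 C0 cc hy[OF p] hx[OF p]])
        have "(pdy h p + (sinh (\<alpha> p) * pdy \<alpha> p * sinh (\<alpha> p) - cosh (\<alpha> p) * (cosh (\<alpha> p) * pdy \<alpha> p)) / (sinh (\<alpha> p) * sinh (\<alpha> p))) * pdx \<xi> p + (h p + cosh (\<alpha> p) / sinh (\<alpha> p)) * pdy (pdx \<xi>) p
            = pdy (pdx h) p" by (rule D1[symmetric])
        also have "\<dots> = pdx (pdy h) p" by (rule shh)
        also have "\<dots> = (pdx h p + (cosh (\<alpha> p) * pdx \<alpha> p * cosh (\<alpha> p) - sinh (\<alpha> p) * (sinh (\<alpha> p) * pdx \<alpha> p)) / (cosh (\<alpha> p) * cosh (\<alpha> p))) * pdy \<xi> p + (h p + sinh (\<alpha> p) / cosh (\<alpha> p)) * pdy (pdx \<xi>) p"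
          by (simp only: D2 sxi)
        finally show "(pdy h p + (sinh (\<alpha> p) * pdy \<alpha> p * sinh (\<alpha> p) - cosh (\<alpha> p) * (cosh (\<alpha> p) * pdy \<alpha> p)) / (sinh (\<alpha> p) * sinh (\<alpha> p))) * pdx \<xi> p + (h p + cosh (\<alpha> p) / sinh (\<alpha> p)) * pdy (pdx \<xi>) p
            = (pdx h p + (cosh (\<alpha> p) * pdx \<alpha> p * cosh (\<alpha> p) - sinh (\<alpha> p) * (sinh (\<alpha> p) * pdx \<alpha> p)) / (cosh (\<alpha> p) * cosh (\<alpha> p))) * pdy \<xi> p + (h p + sinh (\<alpha> p) / cosh (\<alpha> p)) * pdy (pdx \<xi>) p" .
      qed
      then show ?thesis unfolding L1 L2 .
    qed
    show "pdx (\<lambda>q. pdx \<alpha> q + pdx \<xi> q * (cosh (\<alpha> q) / sinh (\<alpha> q))) p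
                 + pdy (\<lambda>q. pdy \<alpha> q + pdy \<xi> q * tanh (\<alpha> q)) p
                 + exp (2 * \<xi> p) * sinh (\<alpha> p) * cosh (\<alpha> p) = 0"
    proof -
      define G where "G = (\<lambda>q. pdy \<alpha> q + pdy \<xi> q * tanh (\<alpha> q))"
      define F where "F = (\<lambda>q. pdx \<alpha> q + pdx \<xi> q * (cosh (\<alpha> q) / sinh (\<alpha> q)))"
      have S0: "sinh (\<alpha> p) \<noteq> 0" and C1: "cosh (\<alpha> p) \<noteq> 0" using M by auto
      have Pq: "pdy A1 q / A2 q = m q * G q" if q: "q \<in> U" for q
      proof -
        have "pdy A1 q / A2 q = - (s q * \<kappa> q) * (pdy \<alpha> q + pdy \<xi> q * (sinh (\<alpha> q) / cosh (\<alpha> q)))"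
          by (rule alg_P[OF _ _ _ A1y[OF q] R(2)[OF q] hy[OF q]]) (use MOD[OF q] regular q in auto)
        then show ?thesis unfolding m_def G_def tanh_def by simp
      qed
      have Qq: "pdx A2 q / A1 q = m q * F q" if q: "q \<in> U" for q
      proof -
        have "pdx A2 q / A1 q = - (s q * \<kappa> q) * (pdx \<alpha> q + pdx \<xi> q * (cosh (\<alpha> q) / sinh (\<alpha> q)))"
          by (rule alg_Q[OF _ _ _ A2x[OF q] R(1)[OF q] hx[OF q]]) (use MOD[OF q] regular q in auto)
        then show ?thesis unfolding m_def F_def by simp
      qed
      have dT: "(\<lambda>q. tanh (\<alpha> q)) differentiable (at p)"
      proof -
        have "(\<lambda>q. sinh (\<alpha> q) / cosh (\<alpha> q)) differentiable (at p)"
          by (rule differentiable_divide[OF diff_sinh[OF dd(1)[OF p]] diff_cosh[OF dd(1)[OF p]] C1])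
        then show ?thesis by (simp add: tanh_def)
      qed
      have dCS: "(\<lambda>q. cosh (\<alpha> q) / sinh (\<alpha> q)) differentiable (at p)"
        by (rule differentiable_divide[OF diff_cosh[OF dd(1)[OF p]] diff_sinh[OF dd(1)[OF p]] S0])
      have dG: "G differentiable (at p)" unfolding G_def using dd[OF p] dT by simp
      have dF: "F differentiable (at p)" unfolding F_def
        by (intro differentiable_add differentiable_mult dd(7)[OF p] dd(9)[OF p] dCS)
      have "pdy (\<lambda>q. pdy A1 q / A2 q) p = pdy (\<lambda>q. m q * G q) p"
        by (rule pdy_cong[OF U p]) (use Pq dd(6)[OF p] dG in auto)
      also have "\<dots> = pdy m p * G p + m p * pdy G p" by (rule binop_step(6)[OF dd(6)[OF p] dG])
      finally have P: "pdy (\<lambda>q. pdy A1 q / A2 q) p = m p * pdy G p" using d0[OF p] by simp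
      have "pdx (\<lambda>q. pdx A2 q / A1 q) p = pdx (\<lambda>q. m q * F q) p"
        by (rule pdx_cong[OF U p]) (use Qq dd(6)[OF p] dF in auto)
      also have "\<dots> = pdx m p * F p + m p * pdx F p" by (rule binop_step(5)[OF dd(6)[OF p] dF])
      finally have Q: "pdx (\<lambda>q. pdx A2 q / A1 q) p = m p * pdx F p" using d0[OF p] by simp
      have HK: "H p * K p = m p * (exp (2 * \<xi> p) * sinh (\<alpha> p) * cosh (\<alpha> p))"
        unfolding R(3)[OF p] R(4)[OF p] e2 m_def by (simp add: algebra_simps)
      have "m p * (pdx F p + pdy G p + exp (2 * \<xi> p) * sinh (\<alpha> p) * cosh (\<alpha> p)) = 0"
        using SE(3)[OF p] unfolding P Q HK by (simp add: algebra_simps)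
      moreover have "m p \<noteq> 0" using ss1(3)[OF p] by auto
      ultimately show ?thesis unfolding F_def G_def by simp
    qed

  qed
  show ?thesis
    apply (rule exI[of _ h], rule exI[of _ \<alpha>], rule exI[of _ \<xi>])
    apply (rule conjI[OF Sh conjI[OF Sal conjI[OF Sxi]]])
    apply (rule ballI)
    apply (erule main)
    done
qed


end
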